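(* Let $\mathcal V$ be a descent category and $k$ a natural number. If $f:X\to Y$ is a fibration of $k$-groupoids and $g:Y\to Z$ is a morphism of $k$-groupoids such that $g$ and $g\circ f$ are hypercovers, then $f$ is a hypercover.
   Context: A descent category is a small category $\mathcal V$ with a subcategory of morphisms called covers such that: $\mathcal V$ has finite limits; pullbacks of covers are covers; if $f$ and $g\circ f$ are covers then $g$ is a cover. A simplicial space is a simplicial object in $\mathcal V$; $\mathrm{Map}(T,X)$ is the finite limit representing simplicial maps $T\to X$; $\mathrm{Map}(S\hookrightarrow T,f)=\mathrm{Map}(S,X)\times_{\mathrm{Map}(S,Y)}\mathrm{Map}(T,Y)$. $\Lambda^n_i=\bigcup_{j\ne i}\partial_j\Delta^n$. A $k$-groupoid is a simplicial space with $X_n\to\mathrm{Map}(\Lambda^n_i,X)$ a cover for $n>0$, $0\le i\le n$, and an isomorphism for $n>k$. A morphism $f$ is a fibration if $X_n\to\mathrm{Map}(\Lambda^n_i\hookrightarrow\Delta^n,f)$ is a cover for all $n>0$, $0\le i\le n$, and a hypercover if $X_n\to\mathrm{Map}(\partial\Delta^n\hookrightarrow\Delta^n,f)$ is a cover for all $n\ge0$. *)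

theory Defs
  imports Main
begin

record ('o,'m) cat =
  Ob  :: "'o set"
  Ar  :: "'m set"
  Dom :: "'m \<Rightarrow> 'o"
  Cod :: "'m \<Rightarrow> 'o"
  Cmp :: "'m \<Rightarrow> 'm \<Rightarrow> 'm"   \<comment> \<open>Cmp C g f = g o f\<close>
  Idt :: "'o \<Rightarrow> 'm"

definition hom :: "('o,'m) cat \<Rightarrow> 'o \<Rightarrow> 'o \<Rightarrow> 'm set" where
  "hom C a b = {f \<in> Ar C. Dom C f = a \<and> Cod C f = b}"

definition is_category :: "('o,'m) cat \<Rightarrow> bool" where
  "is_category C \<longleftrightarrow>
     (\<forall>f\<in>Ar C. Dom C f \<in> Ob C \<and> Cod C f \<in> Ob C) \<and>
     (\<forall>a\<in>Ob C. Idt C a \<in> hom C a a) \<and>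
     (\<forall>f g. f \<in> Ar C \<and> g \<in> Ar C \<and> Cod C f = Dom C g \<longrightarrow>
            Cmp C g f \<in> hom C (Dom C f) (Cod C g)) \<and>
     (\<forall>f g h. f \<in> Ar C \<and> g \<in> Ar C \<and> h \<in> Ar C \<and> Cod C f = Dom C g \<and> Cod C g = Dom C h \<longrightarrow>
            Cmp C h (Cmp C g f) = Cmp C (Cmp C h g) f) \<and>
     (\<forall>f\<in>Ar C. Cmp C f (Idt C (Dom C f)) = f \<and> Cmp C (Idt C (Cod C f)) f = f)"

definition is_iso :: "('o,'m) cat \<Rightarrow> 'm \<Rightarrow> bool" where
  "is_iso C f \<longleftrightarrow> f \<in> Ar C \<and>
     (\<exists>g \<in> hom C (Cod C f) (Dom C f). Cmp C g f = Idt C (Dom C f) \<and> Cmp C f g = Idt C (Cod C f))"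

definition is_diagram :: "('o,'m) cat \<Rightarrow> 'i set \<Rightarrow> ('i \<Rightarrow> 'o) \<Rightarrow> ('i \<times> 'i \<times> 'm) set \<Rightarrow> bool" where
  "is_diagram C I D E \<longleftrightarrow> (\<forall>i\<in>I. D i \<in> Ob C) \<and>
     (\<forall>(i,j,m)\<in>E. i \<in> I \<and> j \<in> I \<and> m \<in> hom C (D i) (D j))"

definition is_cone :: "('o,'m) cat \<Rightarrow> 'i set \<Rightarrow> ('i \<Rightarrow> 'o) \<Rightarrow> ('i \<times> 'i \<times> 'm) set \<Rightarrow> 'o \<Rightarrow> ('i \<Rightarrow> 'm) \<Rightarrow> bool" where
  "is_cone C I D E L p \<longleftrightarrow> L \<in> Ob C \<and> (\<forall>i\<in>I. p i \<in> hom C L (D i)) \<and>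
     (\<forall>(i,j,m)\<in>E. Cmp C m (p i) = p j)"

definition is_limit :: "('o,'m) cat \<Rightarrow> 'i set \<Rightarrow> ('i \<Rightarrow> 'o) \<Rightarrow> ('i \<times> 'i \<times> 'm) set \<Rightarrow> 'o \<Rightarrow> ('i \<Rightarrow> 'm) \<Rightarrow> bool" where
  "is_limit C I D E L p \<longleftrightarrow> is_cone C I D E L p \<and>
     (\<forall>L' q. is_cone C I D E L' q \<longrightarrow>
        (\<exists>!u. u \<in> hom C L' L \<and> (\<forall>i\<in>I. Cmp C (p i) u = q i)))"

text \<open>Finite limits: every diagram over a finite graph has a limit
  (finite graphs can be indexed by natural numbers).\<close>

definition has_finite_limits :: "('o,'m) cat \<Rightarrow> bool" where
  "has_finite_limits C \<longleftrightarrow>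
     (\<forall>(I::nat set) D (E::(nat \<times> nat \<times> 'm) set).
        finite I \<and> finite E \<and> is_diagram C I D E \<longrightarrow> (\<exists>L p. is_limit C I D E L p))"

definition is_pullback :: "('o,'m) cat \<Rightarrow> 'm \<Rightarrow> 'm \<Rightarrow> 'o \<Rightarrow> 'm \<Rightarrow> 'm \<Rightarrow> bool" where
  "is_pullback C f g P p1 p2 \<longleftrightarrow>
     f \<in> Ar C \<and> g \<in> Ar C \<and> Cod C f = Cod C g \<and>
     p1 \<in> hom C P (Dom C f) \<and> p2 \<in> hom C P (Dom C g) \<and> Cmp C f p1 = Cmp C g p2 \<and>
     (\<forall>Q q1 q2. q1 \<in> hom C Q (Dom C f) \<and> q2 \<in> hom C Q (Dom C g) \<and> Cmp C f q1 = Cmp C g q2 \<longrightarrow>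
        (\<exists>!u. u \<in> hom C Q P \<and> Cmp C p1 u = q1 \<and> Cmp C p2 u = q2))"

definition descent_category :: "('o,'m) cat \<Rightarrow> 'm set \<Rightarrow> bool" where
  "descent_category C Cov \<longleftrightarrow>
     is_category C \<and> has_finite_limits C \<and>
     Cov \<subseteq> Ar C \<and>
     (\<forall>a\<in>Ob C. Idt C a \<in> Cov) \<and>
     (\<forall>f\<in>Cov. \<forall>g\<in>Cov. Cod C f = Dom C g \<longrightarrow> Cmp C g f \<in> Cov) \<and>
     (\<forall>f g P p1 p2. f \<in> Cov \<and> is_pullback C f g P p1 p2 \<longrightarrow> p2 \<in> Cov) \<and>
     (\<forall>f g. f \<in> Cov \<and> g \<in> Ar C \<and> Cod C f = Dom C g \<and> Cmp C g f \<in> Cov \<longrightarrow> g \<in> Cov)"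

text \<open>Monotone maps [n] \<rightarrow> [m], represented by functions nat \<Rightarrow> nat (only values on {0..n} matter).\<close>

definition mono_map :: "nat \<Rightarrow> nat \<Rightarrow> (nat \<Rightarrow> nat) \<Rightarrow> bool" where
  "mono_map n m \<alpha> \<longleftrightarrow> (\<forall>i\<le>n. \<alpha> i \<le> m) \<and> (\<forall>i j. i \<le> j \<and> j \<le> n \<longrightarrow> \<alpha> i \<le> \<alpha> j)"

definition is_simplicial :: "('o,'m) cat \<Rightarrow> (nat \<Rightarrow> 'o) \<Rightarrow> (nat \<Rightarrow> nat \<Rightarrow> (nat \<Rightarrow> nat) \<Rightarrow> 'm) \<Rightarrow> bool" where
  "is_simplicial C X Xm \<longleftrightarrow>
     (\<forall>n. X n \<in> Ob C) \<and>
     (\<forall>n m \<alpha>. mono_map n m \<alpha> \<longrightarrow> Xm n m \<alpha> \<in> hom C (X m) (X n)) \<and>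
     (\<forall>n m \<alpha> \<beta>. mono_map n m \<alpha> \<and> (\<forall>i\<le>n. \<alpha> i = \<beta> i) \<longrightarrow> Xm n m \<alpha> = Xm n m \<beta>) \<and>
     (\<forall>n. Xm n n id = Idt C (X n)) \<and>
     (\<forall>n m l \<alpha> \<beta>. mono_map n m \<alpha> \<and> mono_map m l \<beta> \<longrightarrow>
        Xm n l (\<beta> \<circ> \<alpha>) = Cmp C (Xm n m \<alpha>) (Xm m l \<beta>))"

definition is_smap :: "('o,'m) cat \<Rightarrow> (nat \<Rightarrow> 'o) \<Rightarrow> (nat \<Rightarrow> nat \<Rightarrow> (nat \<Rightarrow> nat) \<Rightarrow> 'm)
     \<Rightarrow> (nat \<Rightarrow> 'o) \<Rightarrow> (nat \<Rightarrow> nat \<Rightarrow> (nat \<Rightarrow> nat) \<Rightarrow> 'm) \<Rightarrow> (nat \<Rightarrow> 'm) \<Rightarrow> bool" where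
  "is_smap C X Xm Y Ym f \<longleftrightarrow>
     (\<forall>n. f n \<in> hom C (X n) (Y n)) \<and>
     (\<forall>n m \<alpha>. mono_map n m \<alpha> \<longrightarrow> Cmp C (f n) (Xm n m \<alpha>) = Cmp C (Ym n m \<alpha>) (f m))"

text \<open>A simplicial subset T of \<Delta>^n is given by its set of nondegenerate simplices:
  nonempty subsets of {0..n}, closed under passing to nonempty subsets.\<close>

definition sdim :: "nat set \<Rightarrow> nat" where
  "sdim \<sigma> = card \<sigma> - 1"

text \<open>For \<tau> \<subseteq> \<sigma>, the monotone injection [sdim \<tau>] \<rightarrow> [sdim \<sigma>] corresponding to the inclusion.\<close>

definition incl :: "nat set \<Rightarrow> nat set \<Rightarrow> nat \<Rightarrow> nat" where
  "incl \<tau> \<sigma> k = card {x \<in> \<sigma>. x < sorted_list_of_set \<tau> ! k}"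

definition simplices :: "nat \<Rightarrow> nat set set" where
  "simplices n = {\<sigma>. \<sigma> \<subseteq> {0..n} \<and> \<sigma> \<noteq> {}}"

definition boundary :: "nat \<Rightarrow> nat set set" where
  "boundary n = {\<sigma> \<in> simplices n. \<sigma> \<noteq> {0..n}}"

definition horn :: "nat \<Rightarrow> nat \<Rightarrow> nat set set" where
  "horn n i = {\<sigma> \<in> simplices n. \<exists>j\<le>n. j \<noteq> i \<and> j \<notin> \<sigma>}"

definition sedges :: "(nat \<Rightarrow> nat \<Rightarrow> (nat \<Rightarrow> nat) \<Rightarrow> 'm) \<Rightarrow> nat set set \<Rightarrow> (nat set \<times> nat set \<times> 'm) set" where
  "sedges Xm T = {(\<sigma>, \<tau>, Xm (sdim \<tau>) (sdim \<sigma>) (incl \<tau> \<sigma>)) | \<sigma> \<tau>. \<sigma> \<in> T \<and> \<tau> \<in> T \<and> \<tau> \<subseteq> \<sigma>}"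

definition is_Map :: "('o,'m) cat \<Rightarrow> (nat \<Rightarrow> 'o) \<Rightarrow> (nat \<Rightarrow> nat \<Rightarrow> (nat \<Rightarrow> nat) \<Rightarrow> 'm)
     \<Rightarrow> nat set set \<Rightarrow> 'o \<Rightarrow> (nat set \<Rightarrow> 'm) \<Rightarrow> bool" where
  "is_Map C X Xm T L p \<longleftrightarrow> is_limit C T (\<lambda>\<sigma>. X (sdim \<sigma>)) (sedges Xm T) L p"

definition leg :: "(nat \<Rightarrow> nat \<Rightarrow> (nat \<Rightarrow> nat) \<Rightarrow> 'm) \<Rightarrow> nat \<Rightarrow> nat set \<Rightarrow> 'm" where
  "leg Xm n \<sigma> = Xm (sdim \<sigma>) n (incl \<sigma> {0..n})"

text \<open>The canonical map X_n \<rightarrow> Map(T,X) (T \<subseteq> \<Delta>^n) has property Pr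
  (for every choice of the limit; the map is unique).\<close>

definition canon_map_prop :: "('o,'m) cat \<Rightarrow> ('m \<Rightarrow> bool) \<Rightarrow> (nat \<Rightarrow> 'o)
     \<Rightarrow> (nat \<Rightarrow> nat \<Rightarrow> (nat \<Rightarrow> nat) \<Rightarrow> 'm) \<Rightarrow> nat \<Rightarrow> nat set set \<Rightarrow> bool" where
  "canon_map_prop C Pr X Xm n T \<longleftrightarrow>
     (\<forall>L p u. is_Map C X Xm T L p \<and> u \<in> hom C (X n) L \<and>
        (\<forall>\<sigma>\<in>T. Cmp C (p \<sigma>) u = leg Xm n \<sigma>) \<longrightarrow> Pr u)"

text \<open>The canonical map X_n \<rightarrow> Map(S \<hookrightarrow> T, f) = Map(S,X) \<times>_{Map(S,Y)} Map(T,Y)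
  has property Pr (for every choice of the limits and the pullback).\<close>

definition rel_map_prop :: "('o,'m) cat \<Rightarrow> ('m \<Rightarrow> bool)
     \<Rightarrow> (nat \<Rightarrow> 'o) \<Rightarrow> (nat \<Rightarrow> nat \<Rightarrow> (nat \<Rightarrow> nat) \<Rightarrow> 'm)
     \<Rightarrow> (nat \<Rightarrow> 'o) \<Rightarrow> (nat \<Rightarrow> nat \<Rightarrow> (nat \<Rightarrow> nat) \<Rightarrow> 'm)
     \<Rightarrow> (nat \<Rightarrow> 'm) \<Rightarrow> nat \<Rightarrow> nat set set \<Rightarrow> nat set set \<Rightarrow> bool" where
  "rel_map_prop C Pr X Xm Y Ym f n S T \<longleftrightarrow>
     (\<forall>LSX pSX LSY pSY LTY pTY a b P q1 q2 u.
        is_Map C X Xm S LSX pSX \<and> is_Map C Y Ym S LSY pSY \<and> is_Map C Y Ym T LTY pTY \<and>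
        a \<in> hom C LSX LSY \<and> (\<forall>\<sigma>\<in>S. Cmp C (pSY \<sigma>) a = Cmp C (f (sdim \<sigma>)) (pSX \<sigma>)) \<and>
        b \<in> hom C LTY LSY \<and> (\<forall>\<sigma>\<in>S. Cmp C (pSY \<sigma>) b = pTY \<sigma>) \<and>
        is_pullback C a b P q1 q2 \<and>
        u \<in> hom C (X n) P \<and>
        (\<forall>\<sigma>\<in>S. Cmp C (pSX \<sigma>) (Cmp C q1 u) = leg Xm n \<sigma>) \<and>
        (\<forall>\<sigma>\<in>T. Cmp C (pTY \<sigma>) (Cmp C q2 u) = Cmp C (f (sdim \<sigma>)) (leg Xm n \<sigma>))
        \<longrightarrow> Pr u)"

definition k_groupoid :: "('o,'m) cat \<Rightarrow> 'm set \<Rightarrow> nat \<Rightarrow> (nat \<Rightarrow> 'o)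
     \<Rightarrow> (nat \<Rightarrow> nat \<Rightarrow> (nat \<Rightarrow> nat) \<Rightarrow> 'm) \<Rightarrow> bool" where
  "k_groupoid C Cov k X Xm \<longleftrightarrow> is_simplicial C X Xm \<and>
     (\<forall>n>0. \<forall>i\<le>n. canon_map_prop C (\<lambda>u. u \<in> Cov) X Xm n (horn n i)) \<and>
     (\<forall>n>k. \<forall>i\<le>n. canon_map_prop C (is_iso C) X Xm n (horn n i))"

definition fibration :: "('o,'m) cat \<Rightarrow> 'm set \<Rightarrow> (nat \<Rightarrow> 'o) \<Rightarrow> (nat \<Rightarrow> nat \<Rightarrow> (nat \<Rightarrow> nat) \<Rightarrow> 'm)
     \<Rightarrow> (nat \<Rightarrow> 'o) \<Rightarrow> (nat \<Rightarrow> nat \<Rightarrow> (nat \<Rightarrow> nat) \<Rightarrow> 'm) \<Rightarrow> (nat \<Rightarrow> 'm) \<Rightarrow> bool" where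
  "fibration C Cov X Xm Y Ym f \<longleftrightarrow>
     (\<forall>n>0. \<forall>i\<le>n. rel_map_prop C (\<lambda>u. u \<in> Cov) X Xm Y Ym f n (horn n i) (simplices n))"

definition hypercover :: "('o,'m) cat \<Rightarrow> 'm set \<Rightarrow> (nat \<Rightarrow> 'o) \<Rightarrow> (nat \<Rightarrow> nat \<Rightarrow> (nat \<Rightarrow> nat) \<Rightarrow> 'm)
     \<Rightarrow> (nat \<Rightarrow> 'o) \<Rightarrow> (nat \<Rightarrow> nat \<Rightarrow> (nat \<Rightarrow> nat) \<Rightarrow> 'm) \<Rightarrow> (nat \<Rightarrow> 'm) \<Rightarrow> bool" where
  "hypercover C Cov X Xm Y Ym f \<longleftrightarrow>
     (\<forall>n. rel_map_prop C (\<lambda>u. u \<in> Cov) X Xm Y Ym f n (boundary n) (simplices n))"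

end

theory Submission
  imports Defs
begin
lemma sorted_idx:
  assumes "finite A" "x \<in> A"
  shows "sorted_list_of_set A ! card {y\<in>A. y < x} = (x::nat)"
proof -
  define xs where "xs = sorted_list_of_set A"
  have ss: "sorted_wrt (<) xs" unfolding xs_def by (rule strict_sorted_list_of_set)
  have st: "set xs = A" unfolding xs_def using assms(1) by (rule set_sorted_list_of_set)
  have dd: "distinct xs" unfolding xs_def by (rule distinct_sorted_list_of_set)
  have "x \<in> set xs" using st assms(2) by simp
  then obtain i where i: "i < length xs" "xs ! i = x" by (auto simp only: in_set_conv_nth)
  have eq: "{y\<in>A. y < x} = (\<lambda>j. xs ! j) ` {..<i}"
  proof (rule set_eqI, rule iffI)
    fix y assume y: "y \<in> {y\<in>A. y < x}"
    then have "y \<in> set xs" using st by simp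
    then obtain j where j: "j < length xs" "xs ! j = y" by (auto simp only: in_set_conv_nth)
    have yx: "y < x" using y by simp
    have "j < i"
    proof (rule ccontr)
      assume "\<not> j < i"
      then have "i \<le> j" by simp
      show False
      proof (cases "i = j")
        case True then show False using i j yx by simp
      next
        case False
        then have "i < j" using \<open>i \<le> j\<close> by simp
        then have "xs ! i < xs ! j" using ss j(1) sorted_wrt_nth_less by blast
        then show False using i j yx by simp
      qed
    qed
    then show "y \<in> (\<lambda>j. xs ! j) ` {..<i}" using j by auto
  next
    fix y assume "y \<in> (\<lambda>j. xs ! j) ` {..<i}"
    then obtain j where j: "j < i" "y = xs ! j" by auto
    have jl: "j < length xs" using j i by simp
    then have "xs ! j < xs ! i" using ss j(1) i(1) sorted_wrt_nth_less by blast
    moreover have "xs ! j \<in> A" using jl st nth_mem by blast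
    ultimately show "y \<in> {y\<in>A. y < x}" using i j by simp
  qed
  have "inj_on (\<lambda>j. xs ! j) {..<i}" using dd i(1)
    by (simp add: inj_on_def nth_eq_iff_index_eq)
  then have "card ((\<lambda>j. xs ! j) ` {..<i}) = i" by (simp add: card_image)
  then have "card {y\<in>A. y < x} = i" using eq by simp
  then show ?thesis using i xs_def by simp
qed

lemma sorted_nth_in:
  assumes "finite A" "k < card A"
  shows "sorted_list_of_set A ! k \<in> A"
proof -
  have "k < length (sorted_list_of_set A)" using assms(2) by simp
  then have "sorted_list_of_set A ! k \<in> set (sorted_list_of_set A)" by (rule nth_mem)
  then show ?thesis using assms(1) by simp
qed

lemma sorted_nth_mono':
  assumes "finite A" "i \<le> j" "j < card A"
  shows "sorted_list_of_set A ! i \<le> (sorted_list_of_set A ! j :: nat)"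
proof -
  have "sorted (sorted_list_of_set A)" by simp
  moreover have "j < length (sorted_list_of_set A)" using assms by simp
  ultimately show ?thesis using assms(2) sorted_nth_mono by blast
qed

lemma card_less_in:
  assumes "finite A" "(x::nat) \<in> A"
  shows "card {y\<in>A. y < x} < card A"
  using assms by (intro psubset_card_mono) auto

lemma incl_lt:
  assumes "finite \<sigma>" "\<tau> \<subseteq> \<sigma>" "k < card \<tau>"
  shows "incl \<tau> \<sigma> k < card \<sigma>"
proof -
  have "finite \<tau>" using assms finite_subset by blast
  then have "sorted_list_of_set \<tau> ! k \<in> \<sigma>" using sorted_nth_in assms by blast
  then show ?thesis unfolding incl_def using card_less_in assms(1) by blast
qed

lemma incl_nth:
  assumes "finite \<sigma>" "\<tau> \<subseteq> \<sigma>" "k < card \<tau>"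
  shows "sorted_list_of_set \<sigma> ! incl \<tau> \<sigma> k = sorted_list_of_set \<tau> ! k"
proof -
  have "finite \<tau>" using assms finite_subset by blast
  then have "sorted_list_of_set \<tau> ! k \<in> \<sigma>" using sorted_nth_in assms by blast
  then show ?thesis unfolding incl_def using sorted_idx assms(1) by blast
qed

lemma incl_mono:
  assumes "finite \<sigma>" "\<tau> \<subseteq> \<sigma>" "i \<le> j" "j < card \<tau>"
  shows "incl \<tau> \<sigma> i \<le> incl \<tau> \<sigma> j"
proof -
  have "sorted_list_of_set \<tau> ! i \<le> sorted_list_of_set \<tau> ! j"
    using assms by (intro sorted_nth_mono') (auto intro: finite_subset)
  then show ?thesis unfolding incl_def using assms by (intro card_mono) auto
qed

lemma incl_top:
  assumes "\<sigma> \<subseteq> {0..m}" "k < card \<sigma>"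
  shows "incl \<sigma> {0..m} k = sorted_list_of_set \<sigma> ! k"
proof -
  have fin: "finite \<sigma>" using assms finite_subset by blast
  have t: "sorted_list_of_set \<sigma> ! k \<le> m" using sorted_nth_in[OF fin assms(2)] assms(1) by auto
  have "{x \<in> {0..m}. x < sorted_list_of_set \<sigma> ! k} = {0..<sorted_list_of_set \<sigma> ! k}"
    using t by auto
  then show ?thesis unfolding incl_def by simp
qed

lemma sdim_lt: "\<sigma> \<noteq> {} \<Longrightarrow> finite \<sigma> \<Longrightarrow> (k \<le> sdim \<sigma>) = (k < card \<sigma>)"
proof -
  assume "\<sigma> \<noteq> {}" "finite \<sigma>"
  then have "card \<sigma> > 0" by (simp add: card_gt_0_iff)
  then show ?thesis unfolding sdim_def by linarith
qed

lemma mono_incl: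
  assumes "finite \<sigma>" "\<tau> \<subseteq> \<sigma>" "\<tau> \<noteq> {}"
  shows "mono_map (sdim \<tau>) (sdim \<sigma>) (incl \<tau> \<sigma>)"
proof -
  have ft: "finite \<tau>" using assms finite_subset by blast
  have ns: "\<sigma> \<noteq> {}" using assms by auto
  show ?thesis unfolding mono_map_def
  proof (intro conjI allI impI)
    fix i assume "i \<le> sdim \<tau>"
    then have "i < card \<tau>" using sdim_lt[OF assms(3) ft] by simp
    then show "incl \<tau> \<sigma> i \<le> sdim \<sigma>" using incl_lt[OF assms(1,2)] sdim_lt[OF ns assms(1)] by simp
  next
    fix i j assume "i \<le> j \<and> j \<le> sdim \<tau>"
    then show "incl \<tau> \<sigma> i \<le> incl \<tau> \<sigma> j" using incl_mono[OF assms(1,2)] sdim_lt[OF assms(3) ft] by simp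
  qed
qed

lemma mono_sorted:
  assumes "\<sigma> \<subseteq> {0..N}" "\<sigma> \<noteq> {}"
    and "\<forall>i\<le>N. \<theta> i \<le> m" "\<forall>i j. i \<le> j \<and> j \<le> N \<longrightarrow> \<theta> i \<le> \<theta> j"
  shows "mono_map (sdim \<sigma>) m (\<lambda>k. \<theta> (sorted_list_of_set \<sigma> ! k))"
proof -
  have fin: "finite \<sigma>" using assms finite_subset by blast
  have inN: "k < card \<sigma> \<Longrightarrow> sorted_list_of_set \<sigma> ! k \<le> N" for k
  proof -
    assume "k < card \<sigma>"
    then have "sorted_list_of_set \<sigma> ! k \<in> \<sigma>" using sorted_nth_in[OF fin] by blast
    then show ?thesis using assms(1) by auto
  qed
  show ?thesis unfolding mono_map_def
  proof (intro conjI allI impI)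
    fix i assume "i \<le> sdim \<sigma>"
    then have "i < card \<sigma>" using sdim_lt[OF assms(2) fin] by simp
    then show "\<theta> (sorted_list_of_set \<sigma> ! i) \<le> m" using inN assms(3) by simp
  next
    fix i j assume a: "i \<le> j \<and> j \<le> sdim \<sigma>"
    then have "j < card \<sigma>" using sdim_lt[OF assms(2) fin] by simp
    then show "\<theta> (sorted_list_of_set \<sigma> ! i) \<le> \<theta> (sorted_list_of_set \<sigma> ! j)"
      using inN assms(4) sorted_nth_mono'[OF fin] a by simp
  qed
qed

definition fam :: "('o,'m) cat \<Rightarrow> (nat \<Rightarrow> 'o) \<Rightarrow> (nat \<Rightarrow> nat \<Rightarrow> (nat \<Rightarrow> nat) \<Rightarrow> 'm)
   \<Rightarrow> nat set set \<Rightarrow> 'o \<Rightarrow> (nat set \<Rightarrow> 'm) \<Rightarrow> bool" where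
  "fam C X Xm S W F \<longleftrightarrow> (\<forall>\<sigma>\<in>S. F \<sigma> \<in> hom C W (X (sdim \<sigma>))) \<and>
     (\<forall>\<sigma>\<in>S. \<forall>\<tau>\<in>S. \<tau> \<subseteq> \<sigma> \<longrightarrow> Cmp C (Xm (sdim \<tau>) (sdim \<sigma>) (incl \<tau> \<sigma>)) (F \<sigma>) = F \<tau>)"

definition rst :: "('o,'m) cat \<Rightarrow> (nat \<Rightarrow> nat \<Rightarrow> (nat \<Rightarrow> nat) \<Rightarrow> 'm) \<Rightarrow> nat \<Rightarrow> 'm \<Rightarrow> (nat \<Rightarrow> nat) \<Rightarrow> nat set \<Rightarrow> 'm" where
  "rst C Xm m x \<theta> \<sigma> = Cmp C (Xm (sdim \<sigma>) m (\<lambda>k. \<theta> (sorted_list_of_set \<sigma> ! k))) x"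

definition monoN :: "nat \<Rightarrow> nat \<Rightarrow> (nat \<Rightarrow> nat) \<Rightarrow> bool" where
  "monoN N m \<theta> \<longleftrightarrow> (\<forall>i\<le>N. \<theta> i \<le> m) \<and> (\<forall>i j. i \<le> j \<and> j \<le> N \<longrightarrow> \<theta> i \<le> \<theta> j)"

locale dcat =
  fixes C :: "('o,'m) cat" and Cov :: "'m set"
  assumes desc: "descent_category C Cov"
begin

abbreviation cmp (infixr "\<cdot>" 70) where "g \<cdot> f \<equiv> Cmp C g f"

lemma cat: "is_category C" using desc unfolding descent_category_def by blast

lemma homI: "f \<in> Ar C \<Longrightarrow> Dom C f = a \<Longrightarrow> Cod C f = b \<Longrightarrow> f \<in> hom C a b"
  unfolding hom_def by simp

lemma homD: "f \<in> hom C a b \<Longrightarrow> f \<in> Ar C \<and> Dom C f = a \<and> Cod C f = b"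
  unfolding hom_def by simp

lemma hom_ob: "f \<in> hom C a b \<Longrightarrow> a \<in> Ob C \<and> b \<in> Ob C"
  using cat homD unfolding is_category_def by metis

lemma comp_hom: "f \<in> hom C a b \<Longrightarrow> g \<in> hom C b c \<Longrightarrow> g \<cdot> f \<in> hom C a c"
proof -
  assume f: "f \<in> hom C a b" and g: "g \<in> hom C b c"
  have "g \<cdot> f \<in> hom C (Dom C f) (Cod C g)"
    using cat f g homD unfolding is_category_def by metis
  then show ?thesis using f g homD by metis
qed

lemma assoc: "f \<in> hom C a b \<Longrightarrow> g \<in> hom C b c \<Longrightarrow> h \<in> hom C c d \<Longrightarrow> h \<cdot> (g \<cdot> f) = (h \<cdot> g) \<cdot> f"
proof -
  assume f: "f \<in> hom C a b" and g: "g \<in> hom C b c" and h: "h \<in> hom C c d"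
  then show ?thesis using cat homD[OF f] homD[OF g] homD[OF h] unfolding is_category_def by metis
qed

lemma id_hom: "a \<in> Ob C \<Longrightarrow> Idt C a \<in> hom C a a"
  using cat unfolding is_category_def by blast

lemma idl: "f \<in> hom C a b \<Longrightarrow> Idt C b \<cdot> f = f"
  using cat homD unfolding is_category_def by metis

lemma idr: "f \<in> hom C a b \<Longrightarrow> f \<cdot> Idt C a = f"
  using cat homD unfolding is_category_def by metis

lemma cov_ar: "u \<in> Cov \<Longrightarrow> u \<in> Ar C"
  using desc unfolding descent_category_def by blast

lemma cov_comp: "f \<in> Cov \<Longrightarrow> g \<in> Cov \<Longrightarrow> f \<in> hom C a b \<Longrightarrow> g \<in> hom C b c \<Longrightarrow> g \<cdot> f \<in> Cov"
  using desc homD unfolding descent_category_def by metis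

lemma cov_pb: "f \<in> Cov \<Longrightarrow> is_pullback C f g P p1 p2 \<Longrightarrow> p2 \<in> Cov"
  using desc unfolding descent_category_def by blast

lemma cov_cancel: "f \<in> Cov \<Longrightarrow> g \<in> hom C b c \<Longrightarrow> f \<in> hom C a b \<Longrightarrow> g \<cdot> f \<in> Cov \<Longrightarrow> g \<in> Cov"
  using desc homD unfolding descent_category_def by metis

lemma comp_Ar: "f \<in> Ar C \<Longrightarrow> g \<in> Ar C \<Longrightarrow> Cod C f = Dom C g \<Longrightarrow> g \<cdot> f \<in> Ar C"
  using comp_hom homI homD by metis
lemma comp_Dom: "f \<in> Ar C \<Longrightarrow> g \<in> Ar C \<Longrightarrow> Cod C f = Dom C g \<Longrightarrow> Dom C (g \<cdot> f) = Dom C f"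
  using comp_hom homI homD by metis
lemma comp_Cod: "f \<in> Ar C \<Longrightarrow> g \<in> Ar C \<Longrightarrow> Cod C f = Dom C g \<Longrightarrow> Cod C (g \<cdot> f) = Cod C g"
  using comp_hom homI homD by metis
lemma assoc_r: "f \<in> Ar C \<Longrightarrow> g \<in> Ar C \<Longrightarrow> h \<in> Ar C \<Longrightarrow> Cod C f = Dom C g \<Longrightarrow> Cod C g = Dom C h \<Longrightarrow>
   (h \<cdot> g) \<cdot> f = h \<cdot> (g \<cdot> f)"
  using assoc homI by metis
lemmas cs = comp_Ar comp_Dom comp_Cod assoc_r hom_def

lemma flim: "has_finite_limits C" using desc unfolding descent_category_def by blast

end

definition good :: "nat set set \<Rightarrow> bool" where
  "good S \<longleftrightarrow> (\<forall>\<sigma>\<in>S. finite \<sigma> \<and> \<sigma> \<noteq> {})"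

lemma simplicesD: "\<sigma> \<in> simplices N \<Longrightarrow> \<sigma> \<subseteq> {0..N} \<and> \<sigma> \<noteq> {} \<and> finite \<sigma>"
  unfolding simplices_def using finite_subset by auto

lemma good_simplices: "S \<subseteq> simplices N \<Longrightarrow> good S"
  unfolding good_def using simplicesD by blast

lemma good_sub: "good S \<Longrightarrow> S' \<subseteq> S \<Longrightarrow> good S'"
  unfolding good_def by blast

lemma sorted_top: "k \<le> m \<Longrightarrow> sorted_list_of_set {0..(m::nat)} ! k = k"
proof -
  assume "k \<le> m"
  have "{0..m} = {0..<Suc m}" by auto
  then show ?thesis using \<open>k \<le> m\<close> by (cases "k < m") (auto simp: nth_append)
qed

lemma sdim_top: "sdim {0..m} = m" unfolding sdim_def by simp

context dcat
begin

lemma fam_sub: assumes F: "fam C X Xm S W F" and S: "S' \<subseteq> S" shows "fam C X Xm S' W F"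
  unfolding fam_def
proof (intro conjI ballI impI)
  fix \<sigma> assume "\<sigma> \<in> S'" then have "\<sigma> \<in> S" using S by blast
  then show "F \<sigma> \<in> hom C W (X (sdim \<sigma>))" using F unfolding fam_def by simp
next
  fix \<sigma> \<tau> assume "\<sigma> \<in> S'" "\<tau> \<in> S'" "\<tau> \<subseteq> \<sigma>"
  then have "\<sigma> \<in> S" "\<tau> \<in> S" using S by blast+
  then show "Xm (sdim \<tau>) (sdim \<sigma>) (incl \<tau> \<sigma>) \<cdot> F \<sigma> = F \<tau>" using F \<open>\<tau> \<subseteq> \<sigma>\<close> unfolding fam_def by simp
qed

lemma famD: "fam C X Xm S W F \<Longrightarrow> \<sigma> \<in> S \<Longrightarrow> F \<sigma> \<in> hom C W (X (sdim \<sigma>))"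
  unfolding fam_def by simp

lemma famE: "fam C X Xm S W F \<Longrightarrow> \<sigma> \<in> S \<Longrightarrow> \<tau> \<in> S \<Longrightarrow> \<tau> \<subseteq> \<sigma> \<Longrightarrow> Xm (sdim \<tau>) (sdim \<sigma>) (incl \<tau> \<sigma>) \<cdot> F \<sigma> = F \<tau>"
  unfolding fam_def by simp

lemma famI: "(\<And>\<sigma>. \<sigma> \<in> S \<Longrightarrow> F \<sigma> \<in> hom C W (X (sdim \<sigma>))) \<Longrightarrow>
   (\<And>\<sigma> \<tau>. \<sigma> \<in> S \<Longrightarrow> \<tau> \<in> S \<Longrightarrow> \<tau> \<subseteq> \<sigma> \<Longrightarrow> Xm (sdim \<tau>) (sdim \<sigma>) (incl \<tau> \<sigma>) \<cdot> F \<sigma> = F \<tau>)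
   \<Longrightarrow> fam C X Xm S W F"
  unfolding fam_def by simp

lemma fam_glue:
  assumes F1: "fam C X Xm S W F1" and F2: "fam C X Xm {\<sigma>\<in>S. v \<notin> \<sigma>} W F2"
    and ov: "\<And>\<tau> \<sigma>. \<tau> \<in> S \<Longrightarrow> v \<notin> \<tau> \<Longrightarrow> \<sigma> \<in> S \<Longrightarrow> v \<in> \<sigma> \<Longrightarrow> \<tau> \<subseteq> \<sigma> \<Longrightarrow> F1 \<tau> = F2 \<tau>"
  shows "fam C X Xm S W (\<lambda>\<sigma>. if v \<in> \<sigma> then F1 \<sigma> else F2 \<sigma>)"
proof (rule famI)
  fix \<sigma> assume s: "\<sigma> \<in> S" show "(if v \<in> \<sigma> then F1 \<sigma> else F2 \<sigma>) \<in> hom C W (X (sdim \<sigma>))"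
  proof (cases "v \<in> \<sigma>")
    case True then show ?thesis using famD[OF F1 s] by simp
  next
    case False then have "\<sigma> \<in> {\<sigma>\<in>S. v \<notin> \<sigma>}" using s by simp
    then show ?thesis using famD[OF F2] False by simp
  qed
next
  fix \<sigma> \<tau> assume s: "\<sigma> \<in> S" and t: "\<tau> \<in> S" and ts: "\<tau> \<subseteq> \<sigma>"
  show "Xm (sdim \<tau>) (sdim \<sigma>) (incl \<tau> \<sigma>) \<cdot> (if v \<in> \<sigma> then F1 \<sigma> else F2 \<sigma>) = (if v \<in> \<tau> then F1 \<tau> else F2 \<tau>)"
  proof (cases "v \<in> \<sigma>")
    case True
    have e: "Xm (sdim \<tau>) (sdim \<sigma>) (incl \<tau> \<sigma>) \<cdot> F1 \<sigma> = F1 \<tau>" by (rule famE[OF F1 s t ts])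
    show ?thesis
    proof (cases "v \<in> \<tau>")
      case True then show ?thesis using e \<open>v \<in> \<sigma>\<close> by simp
    next
      case False then show ?thesis using e \<open>v \<in> \<sigma>\<close> ov[OF t False s \<open>v \<in> \<sigma>\<close> ts] by simp
    qed
  next
    case False
    then have vt: "v \<notin> \<tau>" using ts by blast
    have "\<sigma> \<in> {\<sigma>\<in>S. v \<notin> \<sigma>}" "\<tau> \<in> {\<sigma>\<in>S. v \<notin> \<sigma>}" using s t False vt by simp_all
    then have e: "Xm (sdim \<tau>) (sdim \<sigma>) (incl \<tau> \<sigma>) \<cdot> F2 \<sigma> = F2 \<tau>" using famE[OF F2 _ _ ts] by blast
    then show ?thesis using False vt by simp
  qed
qed

context
  fixes X :: "nat \<Rightarrow> 'o" and Xm
  assumes sX: "is_simplicial C X Xm"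
begin

lemma sXm_hom: "mono_map n m \<alpha> \<Longrightarrow> Xm n m \<alpha> \<in> hom C (X m) (X n)"
  using sX unfolding is_simplicial_def by blast

lemma sXm_comp: "mono_map n m \<alpha> \<Longrightarrow> mono_map m l \<beta> \<Longrightarrow> Xm n m \<alpha> \<cdot> Xm m l \<beta> = Xm n l (\<beta> \<circ> \<alpha>)"
  using sX unfolding is_simplicial_def by metis

lemma sXm_cong: "mono_map n m \<alpha> \<Longrightarrow> (\<And>i. i \<le> n \<Longrightarrow> \<alpha> i = \<beta> i) \<Longrightarrow> Xm n m \<alpha> = Xm n m \<beta>"
  using sX unfolding is_simplicial_def by blast

lemma sX_ob: "X n \<in> Ob C"
  using sX unfolding is_simplicial_def by blast

lemma sXm_id: "(\<And>i. i \<le> n \<Longrightarrow> \<alpha> i = i) \<Longrightarrow> Xm n n \<alpha> = Idt C (X n)"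
proof -
  assume a: "\<And>i. i \<le> n \<Longrightarrow> \<alpha> i = i"
  have m: "mono_map n n id" unfolding mono_map_def by simp
  have "Xm n n id = Xm n n \<alpha>" by (rule sXm_cong[OF m]) (simp add: a)
  moreover have "Xm n n id = Idt C (X n)" using sX unfolding is_simplicial_def by blast
  ultimately show ?thesis by simp
qed

lemma mono_incl_s: "good S \<Longrightarrow> \<sigma> \<in> S \<Longrightarrow> \<tau> \<in> S \<Longrightarrow> \<tau> \<subseteq> \<sigma> \<Longrightarrow> mono_map (sdim \<tau>) (sdim \<sigma>) (incl \<tau> \<sigma>)"
  unfolding good_def using mono_incl by blast

lemma incl_hom: "good S \<Longrightarrow> \<sigma> \<in> S \<Longrightarrow> \<tau> \<in> S \<Longrightarrow> \<tau> \<subseteq> \<sigma> \<Longrightarrow>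
    Xm (sdim \<tau>) (sdim \<sigma>) (incl \<tau> \<sigma>) \<in> hom C (X (sdim \<sigma>)) (X (sdim \<tau>))"
  using sXm_hom mono_incl_s by blast

lemma mono_sorted_s: "\<sigma> \<in> simplices N \<Longrightarrow> mono_map N m \<theta> \<Longrightarrow>
   mono_map (sdim \<sigma>) m (\<lambda>k. \<theta> (sorted_list_of_set \<sigma> ! k))"
proof -
  assume s: "\<sigma> \<in> simplices N" and th: "mono_map N m \<theta>"
  have a: "\<sigma> \<subseteq> {0..N}" "\<sigma> \<noteq> {}" using simplicesD[OF s] by blast+
  have b: "\<forall>i\<le>N. \<theta> i \<le> m" "\<forall>i j. i \<le> j \<and> j \<le> N \<longrightarrow> \<theta> i \<le> \<theta> j"
    using th unfolding mono_map_def by blast+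
  show ?thesis by (rule mono_sorted[OF a b])
qed

lemma rst_hom: "\<sigma> \<in> simplices N \<Longrightarrow> mono_map N m \<theta> \<Longrightarrow> x \<in> hom C W (X m) \<Longrightarrow>
   rst C Xm m x \<theta> \<sigma> \<in> hom C W (X (sdim \<sigma>))"
  unfolding rst_def by (rule comp_hom, assumption, rule sXm_hom, rule mono_sorted_s)

lemma rst_fam: assumes S: "S \<subseteq> simplices N" and th: "mono_map N m \<theta>" and x: "x \<in> hom C W (X m)"
  shows "fam C X Xm S W (rst C Xm m x \<theta>)"
  unfolding fam_def
proof (intro conjI ballI impI)
  fix \<sigma> assume "\<sigma> \<in> S" then show "rst C Xm m x \<theta> \<sigma> \<in> hom C W (X (sdim \<sigma>))"
    using rst_hom S th x by blast
next
  fix \<sigma> \<tau> assume s: "\<sigma> \<in> S" and t: "\<tau> \<in> S" and ts: "\<tau> \<subseteq> \<sigma>"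
  have g: "good S" using S good_simplices by blast
  define a where "a = (\<lambda>k. \<theta> (sorted_list_of_set \<sigma> ! k))"
  define b where "b = (\<lambda>k. \<theta> (sorted_list_of_set \<tau> ! k))"
  have ma: "mono_map (sdim \<sigma>) m a" unfolding a_def using mono_sorted_s s S th by blast
  have mb: "mono_map (sdim \<tau>) m b" unfolding b_def using mono_sorted_s t S th by blast
  have mi: "mono_map (sdim \<tau>) (sdim \<sigma>) (incl \<tau> \<sigma>)" using mono_incl_s g s t ts by blast
  have fs: "finite \<sigma>" "\<tau> \<noteq> {}" "finite \<tau>" using simplicesD s t S by blast+
  have "Xm (sdim \<tau>) (sdim \<sigma>) (incl \<tau> \<sigma>) \<cdot> rst C Xm m x \<theta> \<sigma>
      = Xm (sdim \<tau>) (sdim \<sigma>) (incl \<tau> \<sigma>) \<cdot> (Xm (sdim \<sigma>) m a \<cdot> x)"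
    unfolding rst_def a_def by simp
  also have "\<dots> = (Xm (sdim \<tau>) (sdim \<sigma>) (incl \<tau> \<sigma>) \<cdot> Xm (sdim \<sigma>) m a) \<cdot> x"
    by (rule assoc[OF x sXm_hom[OF ma] sXm_hom[OF mi]])
  also have "\<dots> = Xm (sdim \<tau>) m (a \<circ> incl \<tau> \<sigma>) \<cdot> x" using sXm_comp[OF mi ma] by simp
  also have "Xm (sdim \<tau>) m (a \<circ> incl \<tau> \<sigma>) = Xm (sdim \<tau>) m b"
  proof (rule sym, rule sXm_cong[OF mb])
    fix i assume "i \<le> sdim \<tau>"
    then have "i < card \<tau>" using sdim_lt fs by blast
    then show "b i = (a \<circ> incl \<tau> \<sigma>) i" unfolding a_def b_def using incl_nth fs ts by simp
  qed
  finally show "Xm (sdim \<tau>) (sdim \<sigma>) (incl \<tau> \<sigma>) \<cdot> rst C Xm m x \<theta> \<sigma> = rst C Xm m x \<theta> \<tau>"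
    unfolding rst_def b_def by simp
qed

lemma rst_cong: assumes s: "\<sigma> \<in> simplices N" and th: "mono_map N m \<theta>" and eq: "\<And>i. i \<in> \<sigma> \<Longrightarrow> \<theta> i = \<theta>' i"
  shows "rst C Xm m x \<theta> \<sigma> = rst C Xm m x \<theta>' \<sigma>"
proof -
  have fs: "finite \<sigma>" "\<sigma> \<noteq> {}" using simplicesD s by blast+
  have "Xm (sdim \<sigma>) m (\<lambda>k. \<theta> (sorted_list_of_set \<sigma> ! k)) = Xm (sdim \<sigma>) m (\<lambda>k. \<theta>' (sorted_list_of_set \<sigma> ! k))"
  proof (rule sXm_cong[OF mono_sorted_s[OF s th]])
    fix i assume "i \<le> sdim \<sigma>"
    then have "i < card \<sigma>" using sdim_lt fs by blast
    then show "\<theta> (sorted_list_of_set \<sigma> ! i) = \<theta>' (sorted_list_of_set \<sigma> ! i)"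
      using eq sorted_nth_in fs by blast
  qed
  then show ?thesis unfolding rst_def by simp
qed

lemma leg_eq: assumes s: "\<sigma> \<in> simplices m"
  shows "leg Xm m \<sigma> = Xm (sdim \<sigma>) m (\<lambda>k. sorted_list_of_set \<sigma> ! k)"
proof -
  have fs: "finite \<sigma>" "\<sigma> \<noteq> {}" "\<sigma> \<subseteq> {0..m}" using simplicesD s by blast+
  have mid: "mono_map m m (\<lambda>i. i)" unfolding mono_map_def by simp
  show ?thesis unfolding leg_def
  proof (rule sym, rule sXm_cong[OF mono_sorted_s[OF s mid]])
    fix i assume "i \<le> sdim \<sigma>"
    then have "i < card \<sigma>" using sdim_lt fs by blast
    then show "sorted_list_of_set \<sigma> ! i = incl \<sigma> {0..m} i" using incl_top fs by simp
  qed
qed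

lemma leg_rst: "\<sigma> \<in> simplices m \<Longrightarrow> leg Xm m \<sigma> \<cdot> x = rst C Xm m x (\<lambda>i. i) \<sigma>"
  unfolding rst_def using leg_eq by simp

lemma leg_hom: "\<sigma> \<in> simplices m \<Longrightarrow> leg Xm m \<sigma> \<in> hom C (X m) (X (sdim \<sigma>))"
proof -
  assume s: "\<sigma> \<in> simplices m"
  have mid: "mono_map m m (\<lambda>i. i)" unfolding mono_map_def by simp
  show ?thesis using leg_eq[OF s] sXm_hom mono_sorted_s[OF s mid] by simp
qed

lemma rst_comp:
  assumes s: "\<sigma> \<in> simplices N" and th: "mono_map N m' \<theta>" and ps: "mono_map m' m \<psi>" and x: "x \<in> hom C W (X m)"
  shows "rst C Xm m' (Xm m' m \<psi> \<cdot> x) \<theta> \<sigma> = rst C Xm m x (\<psi> \<circ> \<theta>) \<sigma>"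
proof -
  define a where "a = (\<lambda>k. \<theta> (sorted_list_of_set \<sigma> ! k))"
  have ma: "mono_map (sdim \<sigma>) m' a" unfolding a_def by (rule mono_sorted_s[OF s th])
  have "rst C Xm m' (Xm m' m \<psi> \<cdot> x) \<theta> \<sigma> = Xm (sdim \<sigma>) m' a \<cdot> (Xm m' m \<psi> \<cdot> x)"
    unfolding rst_def a_def by simp
  also have "\<dots> = (Xm (sdim \<sigma>) m' a \<cdot> Xm m' m \<psi>) \<cdot> x"
    by (rule assoc[OF x sXm_hom[OF ps] sXm_hom[OF ma]])
  also have "\<dots> = Xm (sdim \<sigma>) m (\<psi> \<circ> a) \<cdot> x" using sXm_comp[OF ma ps] by simp
  finally show ?thesis unfolding rst_def a_def by (simp add: comp_def)
qed

lemma rst_top: assumes x: "x \<in> hom C W (X m)" shows "rst C Xm m x (\<lambda>i. i) {0..m} = x"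
proof -
  have "Xm (sdim {0..m}) m (\<lambda>k. sorted_list_of_set {0..m} ! k) = Idt C (X m)"
    unfolding sdim_top by (rule sXm_id) (simp add: sorted_top)
  then show ?thesis unfolding rst_def using idl x by simp
qed

lemma top_simplex: "{0..m} \<in> simplices m" unfolding simplices_def by auto

lemma leg_top: "leg Xm m {0..m} = Idt C (X m)"
proof -
  have "leg Xm m {0..m} = Xm (sdim {0..m}) m (\<lambda>k. sorted_list_of_set {0..m} ! k)"
    by (rule leg_eq[OF top_simplex])
  also have "\<dots> = Idt C (X m)" unfolding sdim_top by (rule sXm_id) (simp add: sorted_top)
  finally show ?thesis .
qed

lemma fam_comp: "good S \<Longrightarrow> fam C X Xm S W F \<Longrightarrow> r \<in> hom C W' W \<Longrightarrow> fam C X Xm S W' (\<lambda>\<sigma>. F \<sigma> \<cdot> r)"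
  unfolding fam_def
proof (intro conjI ballI impI)
  fix \<sigma> assume "(\<forall>\<sigma>\<in>S. F \<sigma> \<in> hom C W (X (sdim \<sigma>))) \<and> (\<forall>\<sigma>\<in>S. \<forall>\<tau>\<in>S. \<tau> \<subseteq> \<sigma> \<longrightarrow> Xm (sdim \<tau>) (sdim \<sigma>) (incl \<tau> \<sigma>) \<cdot> F \<sigma> = F \<tau>)"
    "r \<in> hom C W' W" "\<sigma> \<in> S"
  then show "F \<sigma> \<cdot> r \<in> hom C W' (X (sdim \<sigma>))" by (intro comp_hom) auto
next
  fix \<sigma> \<tau> assume g: "good S" and F: "(\<forall>\<sigma>\<in>S. F \<sigma> \<in> hom C W (X (sdim \<sigma>))) \<and> (\<forall>\<sigma>\<in>S. \<forall>\<tau>\<in>S. \<tau> \<subseteq> \<sigma> \<longrightarrow> Xm (sdim \<tau>) (sdim \<sigma>) (incl \<tau> \<sigma>) \<cdot> F \<sigma> = F \<tau>)"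
    and r: "r \<in> hom C W' W" and s: "\<sigma> \<in> S" and t: "\<tau> \<in> S" and ts: "\<tau> \<subseteq> \<sigma>"
  have "Xm (sdim \<tau>) (sdim \<sigma>) (incl \<tau> \<sigma>) \<cdot> (F \<sigma> \<cdot> r) = (Xm (sdim \<tau>) (sdim \<sigma>) (incl \<tau> \<sigma>) \<cdot> F \<sigma>) \<cdot> r"
  proof -
    have Fs: "F \<sigma> \<in> hom C W (X (sdim \<sigma>))" using F s by blast
    show ?thesis by (rule assoc[OF r Fs incl_hom[OF g s t ts]])
  qed
  moreover have "Xm (sdim \<tau>) (sdim \<sigma>) (incl \<tau> \<sigma>) \<cdot> F \<sigma> = F \<tau>" using F s t ts by blast
  ultimately show "Xm (sdim \<tau>) (sdim \<sigma>) (incl \<tau> \<sigma>) \<cdot> (F \<sigma> \<cdot> r) = F \<tau> \<cdot> r" by simp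
qed

lemma leg_fam: "S \<subseteq> simplices m \<Longrightarrow> fam C X Xm S (X m) (leg Xm m)"
proof -
  assume S: "S \<subseteq> simplices m"
  have mid: "mono_map m m (\<lambda>i. i)" unfolding mono_map_def by simp
  have "fam C X Xm S (X m) (rst C Xm m (Idt C (X m)) (\<lambda>i. i))"
    using rst_fam[OF S mid] id_hom sX_ob by blast
  moreover have "\<sigma> \<in> S \<Longrightarrow> rst C Xm m (Idt C (X m)) (\<lambda>i. i) \<sigma> = leg Xm m \<sigma>" for \<sigma>
  proof -
    assume "\<sigma> \<in> S" then have s: "\<sigma> \<in> simplices m" using S by blast
    have "rst C Xm m (Idt C (X m)) (\<lambda>i. i) \<sigma> = leg Xm m \<sigma> \<cdot> Idt C (X m)" using leg_rst[OF s] by simp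
    also have "\<dots> = leg Xm m \<sigma>" by (rule idr[OF leg_hom[OF s]])
    finally show ?thesis .
  qed
  ultimately show ?thesis unfolding fam_def by simp
qed

end

lemma smap_hom: "is_smap C X Xm Y Ym f \<Longrightarrow> f n \<in> hom C (X n) (Y n)"
  unfolding is_smap_def by blast

lemma smap_nat: "is_smap C X Xm Y Ym f \<Longrightarrow> mono_map n m \<alpha> \<Longrightarrow> f n \<cdot> Xm n m \<alpha> = Ym n m \<alpha> \<cdot> f m"
  unfolding is_smap_def by blast

lemma rst_smap:
  assumes sX: "is_simplicial C X Xm" and sY: "is_simplicial C Y Ym" and f: "is_smap C X Xm Y Ym f"
    and s: "\<sigma> \<in> simplices N" and th: "mono_map N m \<theta>" and x: "x \<in> hom C W (X m)"
  shows "f (sdim \<sigma>) \<cdot> rst C Xm m x \<theta> \<sigma> = rst C Ym m (f m \<cdot> x) \<theta> \<sigma>"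
proof -
  define a where "a = (\<lambda>k. \<theta> (sorted_list_of_set \<sigma> ! k))"
  have ma: "mono_map (sdim \<sigma>) m a" unfolding a_def by (rule mono_sorted_s[OF sX s th])
  have "f (sdim \<sigma>) \<cdot> (Xm (sdim \<sigma>) m a \<cdot> x) = (f (sdim \<sigma>) \<cdot> Xm (sdim \<sigma>) m a) \<cdot> x"
    by (rule assoc[OF x sXm_hom[OF sX ma] smap_hom[OF f]])
  also have "\<dots> = (Ym (sdim \<sigma>) m a \<cdot> f m) \<cdot> x" using smap_nat[OF f ma] by simp
  also have "\<dots> = Ym (sdim \<sigma>) m a \<cdot> (f m \<cdot> x)"
    by (rule assoc[OF x smap_hom[OF f] sXm_hom[OF sY ma], symmetric])
  finally show ?thesis unfolding rst_def a_def .
qed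

lemma fam_smap:
  assumes sX: "is_simplicial C X Xm" and sY: "is_simplicial C Y Ym" and f: "is_smap C X Xm Y Ym f"
    and g: "good S" and F: "fam C X Xm S W F"
  shows "fam C Y Ym S W (\<lambda>\<sigma>. f (sdim \<sigma>) \<cdot> F \<sigma>)"
  unfolding fam_def
proof (intro conjI ballI impI)
  fix \<sigma> assume "\<sigma> \<in> S" then show "f (sdim \<sigma>) \<cdot> F \<sigma> \<in> hom C W (Y (sdim \<sigma>))"
    using F unfolding fam_def by (intro comp_hom[OF _ smap_hom[OF f]]) auto
next
  fix \<sigma> \<tau> assume s: "\<sigma> \<in> S" and t: "\<tau> \<in> S" and ts: "\<tau> \<subseteq> \<sigma>"
  have mi: "mono_map (sdim \<tau>) (sdim \<sigma>) (incl \<tau> \<sigma>)" using mono_incl_s[OF sX g s t ts] .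
  have Fs: "F \<sigma> \<in> hom C W (X (sdim \<sigma>))" using F s unfolding fam_def by auto
  let ?i = "incl \<tau> \<sigma>"
  have "Ym (sdim \<tau>) (sdim \<sigma>) ?i \<cdot> (f (sdim \<sigma>) \<cdot> F \<sigma>) = (Ym (sdim \<tau>) (sdim \<sigma>) ?i \<cdot> f (sdim \<sigma>)) \<cdot> F \<sigma>"
    by (rule assoc[OF Fs smap_hom[OF f] sXm_hom[OF sY mi]])
  also have "\<dots> = (f (sdim \<tau>) \<cdot> Xm (sdim \<tau>) (sdim \<sigma>) ?i) \<cdot> F \<sigma>" using smap_nat[OF f mi] by simp
  also have "\<dots> = f (sdim \<tau>) \<cdot> (Xm (sdim \<tau>) (sdim \<sigma>) ?i \<cdot> F \<sigma>)"
    by (rule assoc[OF Fs sXm_hom[OF sX mi] smap_hom[OF f], symmetric])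
  also have "\<dots> = f (sdim \<tau>) \<cdot> F \<tau>" using F s t ts unfolding fam_def by simp
  finally show "Ym (sdim \<tau>) (sdim \<sigma>) ?i \<cdot> (f (sdim \<sigma>) \<cdot> F \<sigma>) = f (sdim \<tau>) \<cdot> F \<tau>" .
qed

end

context dcat begin

lemma cone_fam:
  "is_cone C T (\<lambda>\<sigma>. X (sdim \<sigma>)) (sedges Xm T) W q \<longleftrightarrow> W \<in> Ob C \<and> fam C X Xm T W q"
proof
  assume c: "is_cone C T (\<lambda>\<sigma>. X (sdim \<sigma>)) (sedges Xm T) W q"
  have "fam C X Xm T W q"
  proof (rule famI)
    fix \<sigma> assume "\<sigma> \<in> T" then show "q \<sigma> \<in> hom C W (X (sdim \<sigma>))" using c unfolding is_cone_def by simp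
  next
    fix \<sigma> \<tau> assume "\<sigma> \<in> T" "\<tau> \<in> T" "\<tau> \<subseteq> \<sigma>"
    then have "(\<sigma>, \<tau>, Xm (sdim \<tau>) (sdim \<sigma>) (incl \<tau> \<sigma>)) \<in> sedges Xm T" unfolding sedges_def by blast
    then show "Xm (sdim \<tau>) (sdim \<sigma>) (incl \<tau> \<sigma>) \<cdot> q \<sigma> = q \<tau>" using c unfolding is_cone_def by fast
  qed
  then show "W \<in> Ob C \<and> fam C X Xm T W q" using c unfolding is_cone_def by simp
next
  assume a: "W \<in> Ob C \<and> fam C X Xm T W q"
  show "is_cone C T (\<lambda>\<sigma>. X (sdim \<sigma>)) (sedges Xm T) W q"
    unfolding is_cone_def
  proof (intro conjI ballI)
    show "W \<in> Ob C" using a by simp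
  next
    fix \<sigma> assume "\<sigma> \<in> T" then show "q \<sigma> \<in> hom C W (X (sdim \<sigma>))" using famD a by blast
  next
    fix e assume "e \<in> sedges Xm T"
    then obtain \<sigma> \<tau> where e: "e = (\<sigma>, \<tau>, Xm (sdim \<tau>) (sdim \<sigma>) (incl \<tau> \<sigma>))" "\<sigma> \<in> T" "\<tau> \<in> T" "\<tau> \<subseteq> \<sigma>"
      unfolding sedges_def by blast
    have "Xm (sdim \<tau>) (sdim \<sigma>) (incl \<tau> \<sigma>) \<cdot> q \<sigma> = q \<tau>" using famE a e by blast
    then show "case e of (i, j, m) \<Rightarrow> m \<cdot> q i = q j" using e by simp
  qed
qed

lemma Map_fam: "is_Map C X Xm T L p \<Longrightarrow> L \<in> Ob C \<and> fam C X Xm T L p"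
  unfolding is_Map_def is_limit_def using cone_fam by blast

lemma Map_ex: assumes M: "is_Map C X Xm T L p" and W: "W \<in> Ob C" and F: "fam C X Xm T W F"
  shows "\<exists>u. u \<in> hom C W L \<and> (\<forall>\<sigma>\<in>T. p \<sigma> \<cdot> u = F \<sigma>)"
proof -
  have "is_cone C T (\<lambda>\<sigma>. X (sdim \<sigma>)) (sedges Xm T) W F" using cone_fam W F by blast
  then show ?thesis using M unfolding is_Map_def is_limit_def by blast
qed

lemma Map_uniq: assumes sX: "is_simplicial C X Xm" and g: "good T" and M: "is_Map C X Xm T L p"
  and u1: "u1 \<in> hom C W L" and u2: "u2 \<in> hom C W L" and eq: "\<And>\<sigma>. \<sigma> \<in> T \<Longrightarrow> p \<sigma> \<cdot> u1 = p \<sigma> \<cdot> u2"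
  shows "u1 = u2"
proof -
  have W: "W \<in> Ob C" using hom_ob u1 by blast
  have F: "fam C X Xm T W (\<lambda>\<sigma>. p \<sigma> \<cdot> u1)" using fam_comp[OF sX g] Map_fam[OF M] u1 by blast
  have "is_cone C T (\<lambda>\<sigma>. X (sdim \<sigma>)) (sedges Xm T) W (\<lambda>\<sigma>. p \<sigma> \<cdot> u1)" using cone_fam W F by blast
  then have "\<exists>!u. u \<in> hom C W L \<and> (\<forall>\<sigma>\<in>T. p \<sigma> \<cdot> u = p \<sigma> \<cdot> u1)"
    using M unfolding is_Map_def is_limit_def by blast
  then show ?thesis using u1 u2 eq by metis
qed

lemma pbD: "is_pullback C f g P p1 p2 \<Longrightarrow> p1 \<in> hom C P (Dom C f) \<and> p2 \<in> hom C P (Dom C g) \<and> f \<cdot> p1 = g \<cdot> p2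
   \<and> f \<in> hom C (Dom C f) (Cod C f) \<and> g \<in> hom C (Dom C g) (Cod C f) \<and> P \<in> Ob C"
  unfolding is_pullback_def using homI hom_ob by metis

lemma pb_ex: assumes pb: "is_pullback C f g P p1 p2" and q1: "q1 \<in> hom C Q (Dom C f)" and q2: "q2 \<in> hom C Q (Dom C g)"
  and eq: "f \<cdot> q1 = g \<cdot> q2" shows "\<exists>u. u \<in> hom C Q P \<and> p1 \<cdot> u = q1 \<and> p2 \<cdot> u = q2"
  using pb q1 q2 eq unfolding is_pullback_def by metis

lemma pb_uniq: assumes pb: "is_pullback C f g P p1 p2" and u1: "u1 \<in> hom C Q P" and u2: "u2 \<in> hom C Q P"
  and e1: "p1 \<cdot> u1 = p1 \<cdot> u2" and e2: "p2 \<cdot> u1 = p2 \<cdot> u2" shows "u1 = u2"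
proof -
  have d: "p1 \<in> hom C P (Dom C f)" "p2 \<in> hom C P (Dom C g)" "f \<cdot> p1 = g \<cdot> p2"
    "f \<in> hom C (Dom C f) (Cod C f)" "g \<in> hom C (Dom C g) (Cod C f)" using pbD[OF pb] by blast+
  have q1: "p1 \<cdot> u1 \<in> hom C Q (Dom C f)" by (rule comp_hom[OF u1 d(1)])
  have q2: "p2 \<cdot> u1 \<in> hom C Q (Dom C g)" by (rule comp_hom[OF u1 d(2)])
  have "f \<cdot> (p1 \<cdot> u1) = (f \<cdot> p1) \<cdot> u1" by (rule assoc[OF u1 d(1) d(4)])
  also have "\<dots> = (g \<cdot> p2) \<cdot> u1" using d(3) by simp
  also have "\<dots> = g \<cdot> (p2 \<cdot> u1)" by (rule assoc[OF u1 d(2) d(5), symmetric])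
  finally have eq: "f \<cdot> (p1 \<cdot> u1) = g \<cdot> (p2 \<cdot> u1)" .
  have "\<exists>!u. u \<in> hom C Q P \<and> p1 \<cdot> u = p1 \<cdot> u1 \<and> p2 \<cdot> u = p2 \<cdot> u1"
    using pb q1 q2 eq unfolding is_pullback_def by blast
  then show ?thesis using u1 u2 e1 e2 by metis
qed

lemma finite_limit_general:
  assumes fI: "finite (I::'i set)" and fE: "finite E" and dg: "is_diagram C I D E"
  shows "\<exists>L p. is_limit C I D E L p"
proof -
  obtain e where e: "bij_betw e {0..<card I} I" using ex_bij_betw_nat_finite[OF fI] by blast
  define N where "N = {0..<card I}"
  define ei where "ei = inv_into N e"
  have eN: "\<And>n. n \<in> N \<Longrightarrow> e n \<in> I" using e unfolding N_def bij_betw_def by blast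
  have eiI: "\<And>i. i \<in> I \<Longrightarrow> ei i \<in> N \<and> e (ei i) = i"
  proof -
    fix i assume "i \<in> I"
    then have "i \<in> e ` N" using e unfolding N_def bij_betw_def by simp
    then show "ei i \<in> N \<and> e (ei i) = i" unfolding ei_def by (simp add: inv_into_into f_inv_into_f)
  qed
  have ieN: "\<And>n. n \<in> N \<Longrightarrow> ei (e n) = n"
    using e unfolding ei_def N_def bij_betw_def by (simp add: inv_into_f_f)
  define D' where "D' = (\<lambda>n. D (e n))"
  define E' where "E' = {(a, b, m). a \<in> N \<and> b \<in> N \<and> (e a, e b, m) \<in> E}"
  have fE': "finite E'"
  proof -
    have "inj_on (\<lambda>(a, b, m). (e a, e b, m)) E'"
      unfolding E'_def inj_on_def by (auto simp: inj_on_eq_iff[OF bij_betw_imp_inj_on[OF e[folded N_def]]])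
    moreover have "(\<lambda>(a, b, m). (e a, e b, m)) ` E' \<subseteq> E" unfolding E'_def by auto
    ultimately show ?thesis using fE finite_subset finite_imageD by metis
  qed
  have fN: "finite N" unfolding N_def by simp
  have dg': "is_diagram C N D' E'"
    using dg eN unfolding is_diagram_def D'_def E'_def by auto
  obtain L p' where lim: "is_limit C N D' E' L p'"
    using flim fN fE' dg' unfolding has_finite_limits_def by blast
  define p where "p = (\<lambda>i. p' (ei i))"
  have cone: "is_cone C I D E L p"
    unfolding is_cone_def
  proof (intro conjI ballI)
    show "L \<in> Ob C" using lim unfolding is_limit_def is_cone_def by blast
  next
    fix i assume i: "i \<in> I"
    have "p' (ei i) \<in> hom C L (D' (ei i))" using lim eiI[OF i] unfolding is_limit_def is_cone_def by blast
    then show "p i \<in> hom C L (D i)" unfolding p_def D'_def using eiI[OF i] by simp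
  next
    fix x assume x: "x \<in> E"
    obtain i j m where xe: "x = (i, j, m)" by (cases x) auto
    have ij: "i \<in> I" "j \<in> I" using dg x xe unfolding is_diagram_def by auto
    have "(ei i, ei j, m) \<in> E'" unfolding E'_def using eiI[OF ij(1)] eiI[OF ij(2)] x xe by simp
    then have "m \<cdot> p' (ei i) = p' (ei j)" using lim unfolding is_limit_def is_cone_def by fast
    then show "case x of (i, j, m) \<Rightarrow> m \<cdot> p i = p j" unfolding p_def xe by simp
  qed
  have univ: "\<exists>!u. u \<in> hom C L' L \<and> (\<forall>i\<in>I. p i \<cdot> u = q i)" if q: "is_cone C I D E L' q" for L' q
  proof -
    have q': "is_cone C N D' E' L' (\<lambda>n. q (e n))"
      unfolding is_cone_def
    proof (intro conjI ballI)
      show "L' \<in> Ob C" using q unfolding is_cone_def by blast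
    next
      fix n assume "n \<in> N" then show "q (e n) \<in> hom C L' (D' n)" using q eN unfolding is_cone_def D'_def by blast
    next
      fix x assume x: "x \<in> E'"
      obtain a b m where xe: "x = (a, b, m)" by (cases x) auto
      have "(e a, e b, m) \<in> E" using x xe unfolding E'_def by simp
      then have "m \<cdot> q (e a) = q (e b)" using q unfolding is_cone_def by fast
      then show "case x of (a, b, m) \<Rightarrow> m \<cdot> q (e a) = q (e b)" using xe by simp
    qed
    obtain u where u: "u \<in> hom C L' L" "\<forall>n\<in>N. p' n \<cdot> u = q (e n)"
      and uu: "\<And>v. v \<in> hom C L' L \<Longrightarrow> \<forall>n\<in>N. p' n \<cdot> v = q (e n) \<Longrightarrow> v = u"
      using lim q' unfolding is_limit_def by metis
    show ?thesis
    proof (rule ex1I[of _ u])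
      show "u \<in> hom C L' L \<and> (\<forall>i\<in>I. p i \<cdot> u = q i)"
        using u eiI unfolding p_def by fastforce
    next
      fix v assume v: "v \<in> hom C L' L \<and> (\<forall>i\<in>I. p i \<cdot> v = q i)"
      have "\<forall>n\<in>N. p' n \<cdot> v = q (e n)"
      proof
        fix n assume n: "n \<in> N"
        have "p (e n) \<cdot> v = q (e n)" using v eN[OF n] by blast
        then show "p' n \<cdot> v = q (e n)" unfolding p_def using ieN[OF n] by simp
      qed
      then show "v = u" using uu v by blast
    qed
  qed
  show ?thesis using cone univ unfolding is_limit_def by blast
qed

lemma finite_simplices: "finite (simplices N)"
proof -
  have "simplices N \<subseteq> Pow {0..N}" unfolding simplices_def by auto
  then show ?thesis using finite_subset by blast
qed

lemma Map_exists: assumes sX: "is_simplicial C X Xm" and S: "S \<subseteq> simplices N"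
  shows "\<exists>L p. is_Map C X Xm S L p"
proof -
  have fS: "finite S" using S finite_simplices finite_subset by blast
  have g: "good S" using S good_simplices by blast
  have "sedges Xm S \<subseteq> (\<lambda>(\<sigma>, \<tau>). (\<sigma>, \<tau>, Xm (sdim \<tau>) (sdim \<sigma>) (incl \<tau> \<sigma>))) ` (S \<times> S)"
    unfolding sedges_def by auto
  then have fE: "finite (sedges Xm S)" using fS finite_subset by blast
  have dg: "is_diagram C S (\<lambda>\<sigma>. X (sdim \<sigma>)) (sedges Xm S)"
    unfolding is_diagram_def
  proof (intro conjI ballI)
    fix \<sigma> assume "\<sigma> \<in> S" show "X (sdim \<sigma>) \<in> Ob C" using sX_ob[OF sX] .
  next
    fix x assume "x \<in> sedges Xm S"
    then obtain \<sigma> \<tau> where x: "x = (\<sigma>, \<tau>, Xm (sdim \<tau>) (sdim \<sigma>) (incl \<tau> \<sigma>))" "\<sigma> \<in> S" "\<tau> \<in> S" "\<tau> \<subseteq> \<sigma>"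
      unfolding sedges_def by blast
    have "Xm (sdim \<tau>) (sdim \<sigma>) (incl \<tau> \<sigma>) \<in> hom C (X (sdim \<sigma>)) (X (sdim \<tau>))"
      by (rule incl_hom[OF sX g x(2) x(3) x(4)])
    then show "case x of (i, j, m) \<Rightarrow> i \<in> S \<and> j \<in> S \<and> m \<in> hom C (X (sdim i)) (X (sdim j))"
      using x by simp
  qed
  show ?thesis using finite_limit_general[OF fS fE dg] unfolding is_Map_def by blast
qed

lemma pb_exists: assumes f: "f \<in> hom C A B" and g: "g \<in> hom C A' B"
  shows "\<exists>P p1 p2. is_pullback C f g P p1 p2"
proof -
  define D where "D = (\<lambda>i::nat. if i = 0 then A else if i = 1 then A' else B)"
  define E where "E = {(0::nat, 2::nat, f), (1, 2, g)}"
  have ob: "A \<in> Ob C" "A' \<in> Ob C" "B \<in> Ob C" using hom_ob f g by blast+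
  have dg: "is_diagram C {0,1,2} D E" unfolding is_diagram_def D_def E_def using ob f g by auto
  obtain L p where lim: "is_limit C {0,1,2} D E L p"
    using flim dg unfolding has_finite_limits_def E_def by (metis finite.emptyI finite.insertI finite_insert)
  have c: "L \<in> Ob C" "p 0 \<in> hom C L A" "p 1 \<in> hom C L A'" "p 2 \<in> hom C L B" "f \<cdot> p 0 = p 2" "g \<cdot> p 1 = p 2"
    using lim unfolding is_limit_def is_cone_def D_def E_def by auto
  have df: "Dom C f = A" "Cod C f = B" "Dom C g = A'" "Cod C g = B" using homD f g by blast+
  have "is_pullback C f g L (p 0) (p 1)"
    unfolding is_pullback_def
  proof (intro conjI allI impI)
    show "f \<in> Ar C" "g \<in> Ar C" "Cod C f = Cod C g" using homD f g by auto
    show "p 0 \<in> hom C L (Dom C f)" "p 1 \<in> hom C L (Dom C g)" using c df by simp_all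
    show "f \<cdot> p 0 = g \<cdot> p 1" using c by simp
  next
    fix Q q1 q2 assume q: "q1 \<in> hom C Q (Dom C f) \<and> q2 \<in> hom C Q (Dom C g) \<and> f \<cdot> q1 = g \<cdot> q2"
    define q where "q = (\<lambda>i::nat. if i = 0 then q1 else if i = 1 then q2 else f \<cdot> q1)"
    have Q: "Q \<in> Ob C" using hom_ob q by blast
    have fq: "f \<cdot> q1 \<in> hom C Q B" using comp_hom q f df by metis
    have cone: "is_cone C {0,1,2} D E Q q"
      unfolding is_cone_def D_def E_def q_def using Q q fq df by auto
    then obtain u where u: "u \<in> hom C Q L" "\<forall>i\<in>{0,1,2}. p i \<cdot> u = q i"
      and uu: "\<And>v. v \<in> hom C Q L \<Longrightarrow> \<forall>i\<in>{0,1,2}. p i \<cdot> v = q i \<Longrightarrow> v = u"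
      using lim unfolding is_limit_def by metis
    show "\<exists>!u. u \<in> hom C Q L \<and> p 0 \<cdot> u = q1 \<and> p 1 \<cdot> u = q2"
    proof (rule ex1I[of _ u])
      show "u \<in> hom C Q L \<and> p 0 \<cdot> u = q1 \<and> p 1 \<cdot> u = q2" using u unfolding q_def by auto
    next
      fix v assume v: "v \<in> hom C Q L \<and> p 0 \<cdot> v = q1 \<and> p 1 \<cdot> v = q2"
      have "p 2 \<cdot> v = f \<cdot> q1"
      proof -
        have "p 2 \<cdot> v = (f \<cdot> p 0) \<cdot> v" using c by simp
        also have "\<dots> = f \<cdot> (p 0 \<cdot> v)" using assoc[of v Q L "p 0" A f B] v c f by simp
        finally show ?thesis using v by simp
      qed
      then have "\<forall>i\<in>{0,1,2}. p i \<cdot> v = q i" using v unfolding q_def by auto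
      then show "v = u" using uu v by blast
    qed
  qed
  then show ?thesis by blast
qed

end

definition relmatch where
  "relmatch C X Xm Y Ym f S T R pA pB \<longleftrightarrow> R \<in> Ob C \<and> fam C X Xm S R pA \<and> fam C Y Ym T R pB \<and>
     (\<forall>\<sigma>\<in>S. Cmp C (f (sdim \<sigma>)) (pA \<sigma>) = pB \<sigma>) \<and>
     (\<forall>W xs ys. W \<in> Ob C \<and> fam C X Xm S W xs \<and> fam C Y Ym T W ys \<and> (\<forall>\<sigma>\<in>S. Cmp C (f (sdim \<sigma>)) (xs \<sigma>) = ys \<sigma>)
        \<longrightarrow> (\<exists>r. r \<in> hom C W R \<and> (\<forall>\<sigma>\<in>S. Cmp C (pA \<sigma>) r = xs \<sigma>) \<and> (\<forall>\<sigma>\<in>T. Cmp C (pB \<sigma>) r = ys \<sigma>))) \<and>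
     (\<forall>W r1 r2. r1 \<in> hom C W R \<and> r2 \<in> hom C W R \<and> (\<forall>\<sigma>\<in>S. Cmp C (pA \<sigma>) r1 = Cmp C (pA \<sigma>) r2) \<and>
        (\<forall>\<sigma>\<in>T. Cmp C (pB \<sigma>) r1 = Cmp C (pB \<sigma>) r2) \<longrightarrow> r1 = r2)"

context dcat begin

lemma rmD: "relmatch C X Xm Y Ym f S T R pA pB \<Longrightarrow> R \<in> Ob C \<and> fam C X Xm S R pA \<and> fam C Y Ym T R pB \<and>
     (\<forall>\<sigma>\<in>S. f (sdim \<sigma>) \<cdot> pA \<sigma> = pB \<sigma>)"
  unfolding relmatch_def by blast

lemma rm_ex: "relmatch C X Xm Y Ym f S T R pA pB \<Longrightarrow> W \<in> Ob C \<Longrightarrow> fam C X Xm S W xs \<Longrightarrow> fam C Y Ym T W ys \<Longrightarrow>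
   (\<And>\<sigma>. \<sigma> \<in> S \<Longrightarrow> f (sdim \<sigma>) \<cdot> xs \<sigma> = ys \<sigma>) \<Longrightarrow>
   \<exists>r. r \<in> hom C W R \<and> (\<forall>\<sigma>\<in>S. pA \<sigma> \<cdot> r = xs \<sigma>) \<and> (\<forall>\<sigma>\<in>T. pB \<sigma> \<cdot> r = ys \<sigma>)"
  unfolding relmatch_def by blast

lemma rm_uniq: "relmatch C X Xm Y Ym f S T R pA pB \<Longrightarrow> r1 \<in> hom C W R \<Longrightarrow> r2 \<in> hom C W R \<Longrightarrow>
   (\<And>\<sigma>. \<sigma> \<in> S \<Longrightarrow> pA \<sigma> \<cdot> r1 = pA \<sigma> \<cdot> r2) \<Longrightarrow> (\<And>\<sigma>. \<sigma> \<in> T \<Longrightarrow> pB \<sigma> \<cdot> r1 = pB \<sigma> \<cdot> r2) \<Longrightarrow> r1 = r2"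
  unfolding relmatch_def by blast

lemma rm_of_data:
  assumes sX: "is_simplicial C X Xm" and sY: "is_simplicial C Y Ym" and f: "is_smap C X Xm Y Ym f"
    and gT: "good T" and ST: "S \<subseteq> T"
    and MSX: "is_Map C X Xm S LSX pSX" and MSY: "is_Map C Y Ym S LSY pSY" and MTY: "is_Map C Y Ym T LTY pTY"
    and a: "a \<in> hom C LSX LSY" and ae: "\<forall>\<sigma>\<in>S. pSY \<sigma> \<cdot> a = f (sdim \<sigma>) \<cdot> pSX \<sigma>"
    and b: "b \<in> hom C LTY LSY" and be: "\<forall>\<sigma>\<in>S. pSY \<sigma> \<cdot> b = pTY \<sigma>"
    and pb: "is_pullback C a b P q1 q2"
  shows "relmatch C X Xm Y Ym f S T P (\<lambda>\<sigma>. pSX \<sigma> \<cdot> q1) (\<lambda>\<sigma>. pTY \<sigma> \<cdot> q2)"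
proof -
  have gS: "good S" using gT ST good_sub by blast
  have da: "Dom C a = LSX" "Dom C b = LTY" using homD a b by blast+
  have pbd: "q1 \<in> hom C P LSX" "q2 \<in> hom C P LTY" "a \<cdot> q1 = b \<cdot> q2" "P \<in> Ob C"
    using pbD[OF pb] da by auto
  have fSX: "fam C X Xm S LSX pSX" using Map_fam[OF MSX] by blast
  have fSY: "fam C Y Ym S LSY pSY" using Map_fam[OF MSY] by blast
  have fTY: "fam C Y Ym T LTY pTY" using Map_fam[OF MTY] by blast
  have hSX: "\<And>\<sigma>. \<sigma> \<in> S \<Longrightarrow> pSX \<sigma> \<in> hom C LSX (X (sdim \<sigma>))" using famD[OF fSX] .
  have hSY: "\<And>\<sigma>. \<sigma> \<in> S \<Longrightarrow> pSY \<sigma> \<in> hom C LSY (Y (sdim \<sigma>))" using famD[OF fSY] .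
  have hTY: "\<And>\<sigma>. \<sigma> \<in> T \<Longrightarrow> pTY \<sigma> \<in> hom C LTY (Y (sdim \<sigma>))" using famD[OF fTY] .
  have hf: "\<And>n. f n \<in> hom C (X n) (Y n)" using smap_hom[OF f] .
  have famA: "fam C X Xm S P (\<lambda>\<sigma>. pSX \<sigma> \<cdot> q1)" by (rule fam_comp[OF sX gS fSX pbd(1)])
  have famB: "fam C Y Ym T P (\<lambda>\<sigma>. pTY \<sigma> \<cdot> q2)" by (rule fam_comp[OF sY gT fTY pbd(2)])
  have compat: "\<forall>\<sigma>\<in>S. f (sdim \<sigma>) \<cdot> (pSX \<sigma> \<cdot> q1) = pTY \<sigma> \<cdot> q2"
  proof
    fix \<sigma> assume s: "\<sigma> \<in> S"
    have T: "\<sigma> \<in> T" using s ST by blast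
    have "f (sdim \<sigma>) \<cdot> (pSX \<sigma> \<cdot> q1) = (f (sdim \<sigma>) \<cdot> pSX \<sigma>) \<cdot> q1"
      using hSX[OF s] hf pbd by (simp add: cs)
    also have "\<dots> = (pSY \<sigma> \<cdot> a) \<cdot> q1" using ae s by simp
    also have "\<dots> = pSY \<sigma> \<cdot> (a \<cdot> q1)" using hSY[OF s] a pbd by (simp add: cs)
    also have "\<dots> = pSY \<sigma> \<cdot> (b \<cdot> q2)" using pbd by simp
    also have "\<dots> = (pSY \<sigma> \<cdot> b) \<cdot> q2" using hSY[OF s] b pbd by (simp add: cs)
    also have "\<dots> = pTY \<sigma> \<cdot> q2" using be s by simp
    finally show "f (sdim \<sigma>) \<cdot> (pSX \<sigma> \<cdot> q1) = pTY \<sigma> \<cdot> q2" .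
  qed
  have ex: "\<forall>W xs ys. W \<in> Ob C \<and> fam C X Xm S W xs \<and> fam C Y Ym T W ys \<and> (\<forall>\<sigma>\<in>S. f (sdim \<sigma>) \<cdot> xs \<sigma> = ys \<sigma>)
        \<longrightarrow> (\<exists>r. r \<in> hom C W P \<and> (\<forall>\<sigma>\<in>S. (pSX \<sigma> \<cdot> q1) \<cdot> r = xs \<sigma>) \<and> (\<forall>\<sigma>\<in>T. (pTY \<sigma> \<cdot> q2) \<cdot> r = ys \<sigma>))"
  proof (intro allI impI)
    fix W xs ys assume h: "W \<in> Ob C \<and> fam C X Xm S W xs \<and> fam C Y Ym T W ys \<and> (\<forall>\<sigma>\<in>S. f (sdim \<sigma>) \<cdot> xs \<sigma> = ys \<sigma>)"
    obtain ux where ux: "ux \<in> hom C W LSX" "\<forall>\<sigma>\<in>S. pSX \<sigma> \<cdot> ux = xs \<sigma>" using Map_ex[OF MSX] h by blast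
    obtain uy where uy: "uy \<in> hom C W LTY" "\<forall>\<sigma>\<in>T. pTY \<sigma> \<cdot> uy = ys \<sigma>" using Map_ex[OF MTY] h by blast
    have eq: "a \<cdot> ux = b \<cdot> uy"
    proof (rule Map_uniq[OF sY gS MSY comp_hom[OF ux(1) a] comp_hom[OF uy(1) b]])
      fix \<sigma> assume s: "\<sigma> \<in> S"
      have T: "\<sigma> \<in> T" using s ST by blast
      have "pSY \<sigma> \<cdot> (a \<cdot> ux) = (pSY \<sigma> \<cdot> a) \<cdot> ux" using hSY[OF s] a ux by (simp add: cs)
      also have "\<dots> = (f (sdim \<sigma>) \<cdot> pSX \<sigma>) \<cdot> ux" using ae s by simp
      also have "\<dots> = f (sdim \<sigma>) \<cdot> (pSX \<sigma> \<cdot> ux)" using hSX[OF s] hf ux by (simp add: cs)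
      also have "\<dots> = ys \<sigma>" using ux h s by simp
      also have "\<dots> = pTY \<sigma> \<cdot> uy" using uy T by simp
      also have "\<dots> = (pSY \<sigma> \<cdot> b) \<cdot> uy" using be s by simp
      also have "\<dots> = pSY \<sigma> \<cdot> (b \<cdot> uy)" using hSY[OF s] b uy by (simp add: cs)
      finally show "pSY \<sigma> \<cdot> (a \<cdot> ux) = pSY \<sigma> \<cdot> (b \<cdot> uy)" .
    qed
    obtain r where r: "r \<in> hom C W P" "q1 \<cdot> r = ux" "q2 \<cdot> r = uy"
      using pb_ex[OF pb] ux(1) uy(1) da eq by metis
    show "\<exists>r. r \<in> hom C W P \<and> (\<forall>\<sigma>\<in>S. (pSX \<sigma> \<cdot> q1) \<cdot> r = xs \<sigma>) \<and> (\<forall>\<sigma>\<in>T. (pTY \<sigma> \<cdot> q2) \<cdot> r = ys \<sigma>)"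
    proof (intro exI conjI ballI)
      show "r \<in> hom C W P" using r by simp
    next
      fix \<sigma> assume s: "\<sigma> \<in> S"
      have "(pSX \<sigma> \<cdot> q1) \<cdot> r = pSX \<sigma> \<cdot> (q1 \<cdot> r)" using hSX[OF s] pbd r by (simp add: cs)
      then show "(pSX \<sigma> \<cdot> q1) \<cdot> r = xs \<sigma>" using r ux s by simp
    next
      fix \<sigma> assume s: "\<sigma> \<in> T"
      have "(pTY \<sigma> \<cdot> q2) \<cdot> r = pTY \<sigma> \<cdot> (q2 \<cdot> r)" using hTY[OF s] pbd r by (simp add: cs)
      then show "(pTY \<sigma> \<cdot> q2) \<cdot> r = ys \<sigma>" using r uy s by simp
    qed
  qed
  have un: "\<forall>W r1 r2. r1 \<in> hom C W P \<and> r2 \<in> hom C W P \<and> (\<forall>\<sigma>\<in>S. (pSX \<sigma> \<cdot> q1) \<cdot> r1 = (pSX \<sigma> \<cdot> q1) \<cdot> r2) \<and>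
        (\<forall>\<sigma>\<in>T. (pTY \<sigma> \<cdot> q2) \<cdot> r1 = (pTY \<sigma> \<cdot> q2) \<cdot> r2) \<longrightarrow> r1 = r2"
  proof (intro allI impI)
    fix W r1 r2 assume h: "r1 \<in> hom C W P \<and> r2 \<in> hom C W P \<and> (\<forall>\<sigma>\<in>S. (pSX \<sigma> \<cdot> q1) \<cdot> r1 = (pSX \<sigma> \<cdot> q1) \<cdot> r2) \<and>
        (\<forall>\<sigma>\<in>T. (pTY \<sigma> \<cdot> q2) \<cdot> r1 = (pTY \<sigma> \<cdot> q2) \<cdot> r2)"
    have r: "r1 \<in> hom C W P" "r2 \<in> hom C W P" using h by blast+
    have e1: "q1 \<cdot> r1 = q1 \<cdot> r2"
    proof (rule Map_uniq[OF sX gS MSX comp_hom[OF r(1) pbd(1)] comp_hom[OF r(2) pbd(1)]])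
      fix \<sigma> assume s: "\<sigma> \<in> S"
      have "pSX \<sigma> \<cdot> (q1 \<cdot> r1) = (pSX \<sigma> \<cdot> q1) \<cdot> r1" using hSX[OF s] pbd r by (simp add: cs)
      also have "\<dots> = (pSX \<sigma> \<cdot> q1) \<cdot> r2" using h s by blast
      also have "\<dots> = pSX \<sigma> \<cdot> (q1 \<cdot> r2)" using hSX[OF s] pbd r by (simp add: cs)
      finally show "pSX \<sigma> \<cdot> (q1 \<cdot> r1) = pSX \<sigma> \<cdot> (q1 \<cdot> r2)" .
    qed
    have e2: "q2 \<cdot> r1 = q2 \<cdot> r2"
    proof (rule Map_uniq[OF sY gT MTY comp_hom[OF r(1) pbd(2)] comp_hom[OF r(2) pbd(2)]])
      fix \<sigma> assume s: "\<sigma> \<in> T"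
      have "pTY \<sigma> \<cdot> (q2 \<cdot> r1) = (pTY \<sigma> \<cdot> q2) \<cdot> r1" using hTY[OF s] pbd r by (simp add: cs)
      also have "\<dots> = (pTY \<sigma> \<cdot> q2) \<cdot> r2" using h s by blast
      also have "\<dots> = pTY \<sigma> \<cdot> (q2 \<cdot> r2)" using hTY[OF s] pbd r by (simp add: cs)
      finally show "pTY \<sigma> \<cdot> (q2 \<cdot> r1) = pTY \<sigma> \<cdot> (q2 \<cdot> r2)" .
    qed
    show "r1 = r2" by (rule pb_uniq[OF pb r e1 e2])
  qed
  show ?thesis unfolding relmatch_def using pbd(4) famA famB compat ex un by blast
qed

lemma rm_exists:
  assumes sX: "is_simplicial C X Xm" and sY: "is_simplicial C Y Ym" and f: "is_smap C X Xm Y Ym f"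
    and ST: "S \<subseteq> T" and T: "T \<subseteq> simplices m"
    and rp: "rel_map_prop C (\<lambda>u. u \<in> Cov) X Xm Y Ym f m S T"
  shows "\<exists>R pA pB r. relmatch C X Xm Y Ym f S T R pA pB \<and> r \<in> hom C (X m) R \<and>
     (\<forall>\<sigma>\<in>S. pA \<sigma> \<cdot> r = leg Xm m \<sigma>) \<and> (\<forall>\<sigma>\<in>T. pB \<sigma> \<cdot> r = f (sdim \<sigma>) \<cdot> leg Xm m \<sigma>) \<and> r \<in> Cov"
proof -
  have S: "S \<subseteq> simplices m" using ST T by blast
  have gT: "good T" using T good_simplices by blast
  have gS: "good S" using S good_simplices by blast
  have hf: "\<And>n. f n \<in> hom C (X n) (Y n)" using smap_hom[OF f] .
  obtain LSX pSX where MSX: "is_Map C X Xm S LSX pSX" using Map_exists[OF sX S] by blast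
  obtain LSY pSY where MSY: "is_Map C Y Ym S LSY pSY" using Map_exists[OF sY S] by blast
  obtain LTY pTY where MTY: "is_Map C Y Ym T LTY pTY" using Map_exists[OF sY T] by blast
  have fSX: "fam C X Xm S LSX pSX" and oSX: "LSX \<in> Ob C" using Map_fam[OF MSX] by blast+
  have fTY: "fam C Y Ym T LTY pTY" and oTY: "LTY \<in> Ob C" using Map_fam[OF MTY] by blast+
  obtain a where a: "a \<in> hom C LSX LSY" "\<forall>\<sigma>\<in>S. pSY \<sigma> \<cdot> a = f (sdim \<sigma>) \<cdot> pSX \<sigma>"
    using Map_ex[OF MSY oSX fam_smap[OF sX sY f gS fSX]] by blast
  obtain b where b: "b \<in> hom C LTY LSY" "\<forall>\<sigma>\<in>S. pSY \<sigma> \<cdot> b = pTY \<sigma>"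
    using Map_ex[OF MSY oTY fam_sub[OF fTY ST]] by blast
  obtain P q1 q2 where pb: "is_pullback C a b P q1 q2" using pb_exists[OF a(1) b(1)] by blast
  have rm: "relmatch C X Xm Y Ym f S T P (\<lambda>\<sigma>. pSX \<sigma> \<cdot> q1) (\<lambda>\<sigma>. pTY \<sigma> \<cdot> q2)"
    by (rule rm_of_data[OF sX sY f gT ST MSX MSY MTY a b pb])
  have lf: "fam C X Xm S (X m) (leg Xm m)" using leg_fam[OF sX S] .
  have lfT: "fam C X Xm T (X m) (leg Xm m)" using leg_fam[OF sX T] .
  have lfY: "fam C Y Ym T (X m) (\<lambda>\<sigma>. f (sdim \<sigma>) \<cdot> leg Xm m \<sigma>)" using fam_smap[OF sX sY f gT lfT] .
  obtain r where r: "r \<in> hom C (X m) P" "\<forall>\<sigma>\<in>S. (pSX \<sigma> \<cdot> q1) \<cdot> r = leg Xm m \<sigma>"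
    "\<forall>\<sigma>\<in>T. (pTY \<sigma> \<cdot> q2) \<cdot> r = f (sdim \<sigma>) \<cdot> leg Xm m \<sigma>"
    using rm_ex[OF rm sX_ob[OF sX] lf lfY] by blast
  have da: "Dom C a = LSX" "Dom C b = LTY" using homD a b by blast+
  have pbd: "q1 \<in> hom C P LSX" "q2 \<in> hom C P LTY" using pbD[OF pb] da by auto
  have c1: "\<forall>\<sigma>\<in>S. pSX \<sigma> \<cdot> (q1 \<cdot> r) = leg Xm m \<sigma>"
  proof
    fix \<sigma> assume s: "\<sigma> \<in> S"
    have "pSX \<sigma> \<cdot> (q1 \<cdot> r) = (pSX \<sigma> \<cdot> q1) \<cdot> r" using famD[OF fSX s] pbd r by (simp add: cs)
    then show "pSX \<sigma> \<cdot> (q1 \<cdot> r) = leg Xm m \<sigma>" using r s by simp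
  qed
  have c2: "\<forall>\<sigma>\<in>T. pTY \<sigma> \<cdot> (q2 \<cdot> r) = f (sdim \<sigma>) \<cdot> leg Xm m \<sigma>"
  proof
    fix \<sigma> assume s: "\<sigma> \<in> T"
    have "pTY \<sigma> \<cdot> (q2 \<cdot> r) = (pTY \<sigma> \<cdot> q2) \<cdot> r" using famD[OF fTY s] pbd r by (simp add: cs)
    then show "pTY \<sigma> \<cdot> (q2 \<cdot> r) = f (sdim \<sigma>) \<cdot> leg Xm m \<sigma>" using r s by simp
  qed
  have "r \<in> Cov" using rp unfolding rel_map_prop_def
    using MSX MSY MTY a b pb r(1) c1 c2 by blast
  then show ?thesis using rm r by blast
qed

end

lemma mono_id: "mono_map N N (\<lambda>i. i)" unfolding mono_map_def by simp
lemma mono_deg: "mono_map (Suc n) n (\<lambda>i. min i n)" unfolding mono_map_def by auto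
lemma mono_face: "mono_map n (Suc n) (\<lambda>i. i)" unfolding mono_map_def by auto

lemma bd_sub: "boundary N \<subseteq> simplices N" unfolding boundary_def by blast
lemma horn_sub: "horn (Suc n) (Suc n) \<subseteq> boundary (Suc n)"
  unfolding horn_def boundary_def by auto
lemma Dn_sub_D1: "simplices n \<subseteq> simplices (Suc n)" unfolding simplices_def by auto
lemma Dn_B1: "\<sigma> \<in> simplices n \<Longrightarrow> \<sigma> \<in> boundary (Suc n) \<and> Suc n \<notin> \<sigma>"
  unfolding simplices_def boundary_def by auto
lemma B1_notin: "{\<sigma> \<in> boundary (Suc n). Suc n \<notin> \<sigma>} = simplices n"
proof
  show "{\<sigma> \<in> boundary (Suc n). Suc n \<notin> \<sigma>} \<subseteq> simplices n"
  proof
    fix \<sigma> assume "\<sigma> \<in> {\<sigma> \<in> boundary (Suc n). Suc n \<notin> \<sigma>}"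
    then have a: "\<sigma> \<subseteq> {0..Suc n}" "\<sigma> \<noteq> {}" "Suc n \<notin> \<sigma>" unfolding boundary_def simplices_def by auto
    have "\<sigma> \<subseteq> {0..n}"
    proof
      fix x assume "x \<in> \<sigma>" then have "x \<le> Suc n" "x \<noteq> Suc n" using a by auto
      then show "x \<in> {0..n}" by simp
    qed
    then show "\<sigma> \<in> simplices n" using a unfolding simplices_def by simp
  qed
next
  show "simplices n \<subseteq> {\<sigma> \<in> boundary (Suc n). Suc n \<notin> \<sigma>}" using Dn_B1 by blast
qed
lemma B1_notin': "\<sigma> \<in> boundary (Suc n) \<Longrightarrow> Suc n \<notin> \<sigma> \<Longrightarrow> \<sigma> \<in> simplices n"
  using B1_notin by blast
lemma overlap_Bn: "\<tau> \<in> boundary (Suc n) \<Longrightarrow> Suc n \<notin> \<tau> \<Longrightarrow> \<sigma> \<in> boundary (Suc n) \<Longrightarrow> Suc n \<in> \<sigma> \<Longrightarrow> \<tau> \<subseteq> \<sigma>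
   \<Longrightarrow> \<tau> \<in> boundary n"
proof -
  assume t: "\<tau> \<in> boundary (Suc n)" "Suc n \<notin> \<tau>" and s: "\<sigma> \<in> boundary (Suc n)" "Suc n \<in> \<sigma>" and ts: "\<tau> \<subseteq> \<sigma>"
  have tn: "\<tau> \<in> simplices n" using B1_notin' t by blast
  have "\<tau> \<noteq> {0..n}"
  proof
    assume "\<tau> = {0..n}"
    then have "{0..Suc n} \<subseteq> \<sigma>" using ts s(2) by (auto simp: le_Suc_eq)
    moreover have "\<sigma> \<subseteq> {0..Suc n}" "\<sigma> \<noteq> {0..Suc n}" using s(1) unfolding boundary_def simplices_def by auto
    ultimately show False by blast
  qed
  then show ?thesis using tn unfolding boundary_def by blast
qed
lemma Bn_Hn: "\<sigma> \<in> boundary n \<Longrightarrow> \<sigma> \<in> horn (Suc n) (Suc n)"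
proof -
  assume s: "\<sigma> \<in> boundary n"
  then have a: "\<sigma> \<subseteq> {0..n}" "\<sigma> \<noteq> {}" "\<sigma> \<noteq> {0..n}" unfolding boundary_def simplices_def by auto
  have "\<not> {0..n} \<subseteq> \<sigma>" using a by auto
  then obtain j where "j \<in> {0..n}" "j \<notin> \<sigma>" by blast
  then have j: "j \<le> Suc n" "j \<noteq> Suc n" "j \<notin> \<sigma>" by auto
  have "\<sigma> \<in> simplices (Suc n)" using a unfolding simplices_def by auto
  then show ?thesis unfolding horn_def using j by blast
qed
lemma Hn_notin: "\<sigma> \<in> horn (Suc n) (Suc n) \<Longrightarrow> Suc n \<notin> \<sigma> \<Longrightarrow> \<sigma> \<in> boundary n"
proof -
  assume s: "\<sigma> \<in> horn (Suc n) (Suc n)" "Suc n \<notin> \<sigma>"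
  then obtain j where j: "j \<le> Suc n" "j \<noteq> Suc n" "j \<notin> \<sigma>" unfolding horn_def by blast
  have "\<sigma> \<in> simplices n" using s horn_sub B1_notin' by blast
  moreover have "\<sigma> \<noteq> {0..n}" using j by auto
  ultimately show ?thesis unfolding boundary_def by blast
qed
lemma B1_in_Hn: "\<sigma> \<in> boundary (Suc n) \<Longrightarrow> Suc n \<in> \<sigma> \<Longrightarrow> \<sigma> \<in> horn (Suc n) (Suc n)"
proof -
  assume s: "\<sigma> \<in> boundary (Suc n)" "Suc n \<in> \<sigma>"
  then have a: "\<sigma> \<subseteq> {0..Suc n}" "\<sigma> \<noteq> {}" "\<sigma> \<noteq> {0..Suc n}" unfolding boundary_def simplices_def by auto
  have "\<not> {0..Suc n} \<subseteq> \<sigma>" using a by auto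
  then obtain j where "j \<in> {0..Suc n}" "j \<notin> \<sigma>" by blast
  then have "j \<le> Suc n" "j \<notin> \<sigma>" by auto
  moreover then have "j \<noteq> Suc n" using s by auto
  ultimately show ?thesis unfolding horn_def using s(1) unfolding boundary_def by auto
qed
lemma top_Dn: "{0..n} \<in> simplices n" unfolding simplices_def by auto
lemma sub_top: "\<sigma> \<in> simplices n \<Longrightarrow> i \<in> \<sigma> \<Longrightarrow> min i n = i"
  unfolding simplices_def by auto

context dcat begin

lemma rst_post: "is_simplicial C X Xm \<Longrightarrow> \<sigma> \<in> simplices N \<Longrightarrow> mono_map N m \<theta> \<Longrightarrow> x \<in> hom C W (X m) \<Longrightarrow>
   r \<in> hom C W' W \<Longrightarrow> rst C Xm m x \<theta> \<sigma> \<cdot> r = rst C Xm m (x \<cdot> r) \<theta> \<sigma>"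
proof -
  assume sX: "is_simplicial C X Xm" and s: "\<sigma> \<in> simplices N" and th: "mono_map N m \<theta>"
    and x: "x \<in> hom C W (X m)" and r: "r \<in> hom C W' W"
  have h: "Xm (sdim \<sigma>) m (\<lambda>k. \<theta> (sorted_list_of_set \<sigma> ! k)) \<in> hom C (X m) (X (sdim \<sigma>))"
    by (rule sXm_hom[OF sX mono_sorted_s[OF sX s th]])
  show ?thesis unfolding rst_def using h x r by (simp add: cs)
qed

lemma fam_top: assumes sX: "is_simplicial C X Xm" and F: "fam C X Xm (simplices N) W F" and s: "\<sigma> \<in> simplices N"
  shows "F \<sigma> = leg Xm N \<sigma> \<cdot> F {0..N}"
proof -
  have t: "{0..N} \<in> simplices N" by (rule top_Dn)
  have ss: "\<sigma> \<subseteq> {0..N}" using simplicesD s by blast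
  have "Xm (sdim \<sigma>) (sdim {0..N}) (incl \<sigma> {0..N}) \<cdot> F {0..N} = F \<sigma>" by (rule famE[OF F t s ss])
  then show ?thesis unfolding leg_def sdim_top by simp
qed

lemma smap_comp: assumes sX: "is_simplicial C X Xm" and sY: "is_simplicial C Y Ym" and sZ: "is_simplicial C Z Zm"
  and f: "is_smap C X Xm Y Ym f" and g: "is_smap C Y Ym Z Zm g"
  shows "is_smap C X Xm Z Zm (\<lambda>n. g n \<cdot> f n)"
  unfolding is_smap_def
proof (intro conjI allI impI)
  fix n show "g n \<cdot> f n \<in> hom C (X n) (Z n)" by (rule comp_hom[OF smap_hom[OF f] smap_hom[OF g]])
next
  fix n m \<alpha> assume a: "mono_map n m \<alpha>"
  have h: "f n \<in> hom C (X n) (Y n)" "g n \<in> hom C (Y n) (Z n)" "f m \<in> hom C (X m) (Y m)" "g m \<in> hom C (Y m) (Z m)"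
    "Xm n m \<alpha> \<in> hom C (X m) (X n)" "Ym n m \<alpha> \<in> hom C (Y m) (Y n)" "Zm n m \<alpha> \<in> hom C (Z m) (Z n)"
    using smap_hom[OF f] smap_hom[OF g] sXm_hom[OF sX a] sXm_hom[OF sY a] sXm_hom[OF sZ a] by auto
  have "(g n \<cdot> f n) \<cdot> Xm n m \<alpha> = g n \<cdot> (f n \<cdot> Xm n m \<alpha>)" using h by (simp add: cs)
  also have "\<dots> = g n \<cdot> (Ym n m \<alpha> \<cdot> f m)" using smap_nat[OF f a] by simp
  also have "\<dots> = (g n \<cdot> Ym n m \<alpha>) \<cdot> f m" using h by (simp add: cs)
  also have "\<dots> = (Zm n m \<alpha> \<cdot> g m) \<cdot> f m" using smap_nat[OF g a] by simp
  also have "\<dots> = Zm n m \<alpha> \<cdot> (g m \<cdot> f m)" using h by (simp add: cs)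
  finally show "(g n \<cdot> f n) \<cdot> Xm n m \<alpha> = Zm n m \<alpha> \<cdot> (g m \<cdot> f m)" .
qed

lemma face_leg: assumes sX: "is_simplicial C X Xm" and s: "\<sigma> \<in> simplices n" and z: "z \<in> hom C W (X (Suc n))"
  shows "leg Xm n \<sigma> \<cdot> (Xm n (Suc n) (\<lambda>i. i) \<cdot> z) = leg Xm (Suc n) \<sigma> \<cdot> z"
proof -
  have s1: "\<sigma> \<in> simplices (Suc n)" using s Dn_sub_D1 by blast
  have "leg Xm n \<sigma> \<cdot> (Xm n (Suc n) (\<lambda>i. i) \<cdot> z) = rst C Xm n (Xm n (Suc n) (\<lambda>i. i) \<cdot> z) (\<lambda>i. i) \<sigma>"
    by (rule leg_rst[OF sX s])
  also have "\<dots> = rst C Xm (Suc n) z ((\<lambda>i. i) \<circ> (\<lambda>i. i)) \<sigma>"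
    by (rule rst_comp[OF sX s mono_id mono_face z])
  also have "\<dots> = leg Xm (Suc n) \<sigma> \<cdot> z" using leg_rst[OF sX s1, of z] by (simp add: comp_def)
  finally show ?thesis .
qed

lemma rst_deg_id: assumes sX: "is_simplicial C X Xm" and s: "\<sigma> \<in> simplices n"
  shows "rst C Xm n x (\<lambda>i. min i n) \<sigma> = leg Xm n \<sigma> \<cdot> x"
proof -
  have s1: "\<sigma> \<in> simplices (Suc n)" using s Dn_sub_D1 by blast
  have "rst C Xm n x (\<lambda>i. min i n) \<sigma> = rst C Xm n x (\<lambda>i. i) \<sigma>"
    by (rule rst_cong[OF sX s1 mono_deg]) (rule sub_top[OF s])
  then show ?thesis using leg_rst[OF sX s] by simp
qed

lemma leg_nat: assumes sX: "is_simplicial C X Xm" and sY: "is_simplicial C Y Ym" and f: "is_smap C X Xm Y Ym f"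
  and s: "\<sigma> \<in> simplices m" and x: "x \<in> hom C W (X m)"
  shows "f (sdim \<sigma>) \<cdot> (leg Xm m \<sigma> \<cdot> x) = leg Ym m \<sigma> \<cdot> (f m \<cdot> x)"
  using rst_smap[OF sX sY f s mono_id x] leg_rst[OF sX s] leg_rst[OF sY s] by simp

end

context dcat begin

lemma pre: "q \<in> hom C a b \<Longrightarrow> p \<in> hom C b c \<Longrightarrow> x \<in> hom C w a \<Longrightarrow> p \<cdot> q = r \<Longrightarrow> p \<cdot> (q \<cdot> x) = r \<cdot> x"
proof -
  assume q: "q \<in> hom C a b" and p: "p \<in> hom C b c" and x: "x \<in> hom C w a" and e: "p \<cdot> q = r"
  have "p \<cdot> (q \<cdot> x) = (p \<cdot> q) \<cdot> x" by (rule assoc[OF x q p])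
  then show ?thesis using e by simp
qed

lemma main_step:
  assumes sX: "is_simplicial C X Xm" and sY: "is_simplicial C Y Ym" and sZ: "is_simplicial C Z Zm"
    and f: "is_smap C X Xm Y Ym f" and g: "is_smap C Y Ym Z Zm g"
    and fib: "fibration C Cov X Xm Y Ym f"
    and hg: "hypercover C Cov Y Ym Z Zm g"
    and hgfc: "hypercover C Cov X Xm Z Zm (\<lambda>n. g n \<cdot> f n)"
    and MSX: "is_Map C X Xm (boundary n) LSX pSX" and MSY: "is_Map C Y Ym (boundary n) LSY pSY"
    and MTY: "is_Map C Y Ym (simplices n) LTY pTY"
    and a: "a \<in> hom C LSX LSY" and ae: "\<forall>\<sigma>\<in>boundary n. pSY \<sigma> \<cdot> a = f (sdim \<sigma>) \<cdot> pSX \<sigma>"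
    and b: "b \<in> hom C LTY LSY" and be: "\<forall>\<sigma>\<in>boundary n. pSY \<sigma> \<cdot> b = pTY \<sigma>"
    and pb: "is_pullback C a b P q1 q2"
    and u: "u \<in> hom C (X n) P"
    and uc1: "\<forall>\<sigma>\<in>boundary n. pSX \<sigma> \<cdot> (q1 \<cdot> u) = leg Xm n \<sigma>"
    and uc2: "\<forall>\<sigma>\<in>simplices n. pTY \<sigma> \<cdot> (q2 \<cdot> u) = f (sdim \<sigma>) \<cdot> leg Xm n \<sigma>"
  shows "u \<in> Cov"
proof -
  define gf where "gf = (\<lambda>n. g n \<cdot> f n)"
  have sgf: "is_smap C X Xm Z Zm gf" unfolding gf_def by (rule smap_comp[OF sX sY sZ f g])
  have hf: "\<And>k. f k \<in> hom C (X k) (Y k)" using smap_hom[OF f] .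
  have hg': "\<And>k. g k \<in> hom C (Y k) (Z k)" using smap_hom[OF g] .
  have hgf: "\<And>k. gf k \<in> hom C (X k) (Z k)" using smap_hom[OF sgf] .
  have gfe: "\<And>k. gf k = g k \<cdot> f k" unfolding gf_def by simp
  have gDn: "good (simplices n)" "good (boundary n)" "good (simplices (Suc n))" "good (boundary (Suc n))"
    "good (horn (Suc n) (Suc n))"
    using good_simplices bd_sub horn_sub Dn_sub_D1 by (meson order_trans subset_refl)+
  have BD: "boundary n \<subseteq> simplices n" "boundary (Suc n) \<subseteq> simplices (Suc n)" "horn (Suc n) (Suc n) \<subseteq> boundary (Suc n)"
    "horn (Suc n) (Suc n) \<subseteq> simplices (Suc n)" using bd_sub horn_sub by blast+
  note topn = top_Dn[of n] and top1 = top_Dn[of "Suc n"]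
  have sdt: "sdim {0..n} = n" "sdim {0..Suc n} = Suc n" by (rule sdim_top)+
  define pA where "pA = (\<lambda>\<sigma>. pSX \<sigma> \<cdot> q1)"
  define pB where "pB = (\<lambda>\<sigma>. pTY \<sigma> \<cdot> q2)"
  have rmP: "relmatch C X Xm Y Ym f (boundary n) (simplices n) P pA pB"
    unfolding pA_def pB_def by (rule rm_of_data[OF sX sY f gDn(1) BD(1) MSX MSY MTY a ae b be pb])
  have fpA: "fam C X Xm (boundary n) P pA" and fpB: "fam C Y Ym (simplices n) P pB"
    and cpP: "\<forall>\<sigma>\<in>boundary n. f (sdim \<sigma>) \<cdot> pA \<sigma> = pB \<sigma>" and oP: "P \<in> Ob C" using rmD[OF rmP] by blast+
  have da: "Dom C a = LSX" "Dom C b = LTY" using homD a b by blast+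
  have pbd: "q1 \<in> hom C P LSX" "q2 \<in> hom C P LTY" using pbD[OF pb] da by auto
  have uA: "\<forall>\<sigma>\<in>boundary n. pA \<sigma> \<cdot> u = leg Xm n \<sigma>"
  proof
    fix \<sigma> assume s: "\<sigma> \<in> boundary n"
    have "pA \<sigma> \<cdot> u = pSX \<sigma> \<cdot> (q1 \<cdot> u)" unfolding pA_def
      using famD[OF Map_fam[OF MSX, THEN conjunct2] s] pbd u by (simp add: cs)
    then show "pA \<sigma> \<cdot> u = leg Xm n \<sigma>" using uc1 s by simp
  qed
  have uB: "\<forall>\<sigma>\<in>simplices n. pB \<sigma> \<cdot> u = f (sdim \<sigma>) \<cdot> leg Xm n \<sigma>"
  proof
    fix \<sigma> assume s: "\<sigma> \<in> simplices n"
    have "pB \<sigma> \<cdot> u = pTY \<sigma> \<cdot> (q2 \<cdot> u)" unfolding pB_def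
      using famD[OF Map_fam[OF MTY, THEN conjunct2] s] pbd u by (simp add: cs)
    then show "pB \<sigma> \<cdot> u = f (sdim \<sigma>) \<cdot> leg Xm n \<sigma>" using uc2 s by simp
  qed
  have hpA: "\<And>\<sigma>. \<sigma> \<in> boundary n \<Longrightarrow> pA \<sigma> \<in> hom C P (X (sdim \<sigma>))" using famD[OF fpA] .
  have hpB: "\<And>\<sigma>. \<sigma> \<in> simplices n \<Longrightarrow> pB \<sigma> \<in> hom C P (Y (sdim \<sigma>))" using famD[OF fpB] .
  obtain P' pA' pB' u' where rmP': "relmatch C X Xm Z Zm gf (boundary n) (simplices n) P' pA' pB'"
    and u': "u' \<in> hom C (X n) P'" "\<forall>\<sigma>\<in>boundary n. pA' \<sigma> \<cdot> u' = leg Xm n \<sigma>"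
       "\<forall>\<sigma>\<in>simplices n. pB' \<sigma> \<cdot> u' = gf (sdim \<sigma>) \<cdot> leg Xm n \<sigma>" and u'C: "u' \<in> Cov"
    using rm_exists[OF sX sZ sgf BD(1) subset_refl] hgfc unfolding hypercover_def gf_def by blast
  obtain P'' pA'' pB'' u'' where rmP'': "relmatch C X Xm Z Zm gf (boundary (Suc n)) (simplices (Suc n)) P'' pA'' pB''"
    and u'': "u'' \<in> hom C (X (Suc n)) P''" "\<forall>\<sigma>\<in>boundary (Suc n). pA'' \<sigma> \<cdot> u'' = leg Xm (Suc n) \<sigma>"
       "\<forall>\<sigma>\<in>simplices (Suc n). pB'' \<sigma> \<cdot> u'' = gf (sdim \<sigma>) \<cdot> leg Xm (Suc n) \<sigma>" and u''C: "u'' \<in> Cov"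
    using rm_exists[OF sX sZ sgf BD(2) subset_refl] hgfc unfolding hypercover_def gf_def by blast
  obtain Q qA qB v where rmQ: "relmatch C Y Ym Z Zm g (boundary (Suc n)) (simplices (Suc n)) Q qA qB"
    and v: "v \<in> hom C (Y (Suc n)) Q" "\<forall>\<sigma>\<in>boundary (Suc n). qA \<sigma> \<cdot> v = leg Ym (Suc n) \<sigma>"
       "\<forall>\<sigma>\<in>simplices (Suc n). qB \<sigma> \<cdot> v = g (sdim \<sigma>) \<cdot> leg Ym (Suc n) \<sigma>" and vC: "v \<in> Cov"
    using rm_exists[OF sY sZ g BD(2) subset_refl] hg unfolding hypercover_def by blast
  have fibH: "rel_map_prop C (\<lambda>u. u \<in> Cov) X Xm Y Ym f (Suc n) (horn (Suc n) (Suc n)) (simplices (Suc n))"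
    using fib unfolding fibration_def by blast
  obtain H hA hB h where rmH: "relmatch C X Xm Y Ym f (horn (Suc n) (Suc n)) (simplices (Suc n)) H hA hB"
    and h: "h \<in> hom C (X (Suc n)) H" "\<forall>\<sigma>\<in>horn (Suc n) (Suc n). hA \<sigma> \<cdot> h = leg Xm (Suc n) \<sigma>"
       "\<forall>\<sigma>\<in>simplices (Suc n). hB \<sigma> \<cdot> h = f (sdim \<sigma>) \<cdot> leg Xm (Suc n) \<sigma>" and hC: "h \<in> Cov"
    using rm_exists[OF sX sY f BD(4) subset_refl fibH] by blast
  have fpA': "fam C X Xm (boundary n) P' pA'" and fpB': "fam C Z Zm (simplices n) P' pB'" and oP': "P' \<in> Ob C"
    using rmD[OF rmP'] by blast+
  have fpA'': "fam C X Xm (boundary (Suc n)) P'' pA''" and fpB'': "fam C Z Zm (simplices (Suc n)) P'' pB''"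
    using rmD[OF rmP''] by blast+
  have fqA: "fam C Y Ym (boundary (Suc n)) Q qA" and fqB: "fam C Z Zm (simplices (Suc n)) Q qB"
    using rmD[OF rmQ] by blast+
  have fhA: "fam C X Xm (horn (Suc n) (Suc n)) H hA" and fhB: "fam C Y Ym (simplices (Suc n)) H hB"
    using rmD[OF rmH] by blast+
  obtain al where al: "al \<in> hom C P P'" "\<forall>\<sigma>\<in>boundary n. pA' \<sigma> \<cdot> al = pA \<sigma>"
    "\<forall>\<sigma>\<in>simplices n. pB' \<sigma> \<cdot> al = g (sdim \<sigma>) \<cdot> pB \<sigma>"
  proof -
    have "\<exists>r. r \<in> hom C P P' \<and> (\<forall>\<sigma>\<in>boundary n. pA' \<sigma> \<cdot> r = pA \<sigma>) \<and> (\<forall>\<sigma>\<in>simplices n. pB' \<sigma> \<cdot> r = g (sdim \<sigma>) \<cdot> pB \<sigma>)"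
    proof (rule rm_ex[OF rmP' oP fpA fam_smap[OF sY sZ g gDn(1) fpB]])
      fix \<sigma> assume s: "\<sigma> \<in> boundary n"
      have "gf (sdim \<sigma>) \<cdot> pA \<sigma> = g (sdim \<sigma>) \<cdot> (f (sdim \<sigma>) \<cdot> pA \<sigma>)"
        unfolding gfe using hf hg' hpA[OF s] by (simp add: cs)
      then show "gf (sdim \<sigma>) \<cdot> pA \<sigma> = g (sdim \<sigma>) \<cdot> pB \<sigma>" using cpP s by simp
    qed
    then show ?thesis using that by blast
  qed
  obtain M1 m1x m1p where pb1: "is_pullback C u' al M1 m1x m1p" using pb_exists[OF u'(1) al(1)] by blast
  have m1pC: "m1p \<in> Cov" by (rule cov_pb[OF u'C pb1])
  have m1: "m1x \<in> hom C M1 (X n)" "m1p \<in> hom C M1 P" "u' \<cdot> m1x = al \<cdot> m1p"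
    using pbD[OF pb1] homD[OF u'(1)] homD[OF al(1)] by auto
  have D1: "\<forall>\<sigma>\<in>boundary n. pA \<sigma> \<cdot> m1p = leg Xm n \<sigma> \<cdot> m1x"
  proof
    fix \<sigma> assume s: "\<sigma> \<in> boundary n"
    have hs: "pA' \<sigma> \<in> hom C P' (X (sdim \<sigma>))" using famD[OF fpA' s] .
    have "pA \<sigma> \<cdot> m1p = (pA' \<sigma> \<cdot> al) \<cdot> m1p" using al s by simp
    also have "\<dots> = pA' \<sigma> \<cdot> (al \<cdot> m1p)" using hs al m1 by (simp add: cs)
    also have "\<dots> = pA' \<sigma> \<cdot> (u' \<cdot> m1x)" using m1 by simp
    also have "\<dots> = (pA' \<sigma> \<cdot> u') \<cdot> m1x" using hs u' m1 by (simp add: cs)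
    finally show "pA \<sigma> \<cdot> m1p = leg Xm n \<sigma> \<cdot> m1x" using u' s by simp
  qed
  have D2: "g n \<cdot> (pB {0..n} \<cdot> m1p) = gf n \<cdot> m1x"
  proof -
    have hs: "pB' {0..n} \<in> hom C P' (Z n)" using famD[OF fpB' topn] sdt by simp
    have hb: "pB {0..n} \<in> hom C P (Y n)" using hpB[OF topn] sdt by simp
    have "g n \<cdot> (pB {0..n} \<cdot> m1p) = (g n \<cdot> pB {0..n}) \<cdot> m1p" using hb hg' m1 by (simp add: cs)
    also have "\<dots> = (pB' {0..n} \<cdot> al) \<cdot> m1p" using al topn sdt by simp
    also have "\<dots> = pB' {0..n} \<cdot> (al \<cdot> m1p)" using hs al m1 by (simp add: cs)
    also have "\<dots> = pB' {0..n} \<cdot> (u' \<cdot> m1x)" using m1 by simp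
    also have "\<dots> = (pB' {0..n} \<cdot> u') \<cdot> m1x" using hs u' m1 by (simp add: cs)
    also have "\<dots> = (gf n \<cdot> leg Xm n {0..n}) \<cdot> m1x" using u' topn sdt by simp
    also have "\<dots> = gf n \<cdot> m1x" using leg_top[OF sX] idr[OF hgf[of n]] by simp
    finally show ?thesis .
  qed
  have D3: "\<forall>\<sigma>\<in>boundary n. pB \<sigma> \<cdot> m1p = f (sdim \<sigma>) \<cdot> (leg Xm n \<sigma> \<cdot> m1x)"
  proof
    fix \<sigma> assume s: "\<sigma> \<in> boundary n"
    have "pB \<sigma> \<cdot> m1p = (f (sdim \<sigma>) \<cdot> pA \<sigma>) \<cdot> m1p" using cpP s by simp
    also have "\<dots> = f (sdim \<sigma>) \<cdot> (pA \<sigma> \<cdot> m1p)" using hf hpA[OF s] m1 by (simp add: cs)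
    finally show "pB \<sigma> \<cdot> m1p = f (sdim \<sigma>) \<cdot> (leg Xm n \<sigma> \<cdot> m1x)" using D1 s by simp
  qed
  have oM1: "M1 \<in> Ob C" using pbD[OF pb1] by blast
  define xsB where "xsB = (\<lambda>\<sigma>. if Suc n \<in> \<sigma> then rst C Ym n (f n \<cdot> m1x) (\<lambda>i. min i n) \<sigma> else pB \<sigma> \<cdot> m1p)"
  define yB where "yB = g n \<cdot> (pB {0..n} \<cdot> m1p)"
  have hyB: "yB \<in> hom C M1 (Z n)" unfolding yB_def
  proof -
    have hb0: "pB {0..n} \<in> hom C P (Y n)" using hpB[OF topn] sdt by simp
    show "g n \<cdot> (pB {0..n} \<cdot> m1p) \<in> hom C M1 (Z n)" by (rule comp_hom[OF comp_hom[OF m1(2) hb0] hg'])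
  qed
  have hfx: "f n \<cdot> m1x \<in> hom C M1 (Y n)" by (rule comp_hom[OF m1(1) hf])
  have fxsB: "fam C Y Ym (boundary (Suc n)) M1 xsB" unfolding xsB_def
  proof (rule fam_glue)
    show "fam C Y Ym (boundary (Suc n)) M1 (rst C Ym n (f n \<cdot> m1x) (\<lambda>i. min i n))"
      by (rule rst_fam[OF sY BD(2) mono_deg hfx])
    show "fam C Y Ym {\<sigma> \<in> boundary (Suc n). Suc n \<notin> \<sigma>} M1 (\<lambda>\<sigma>. pB \<sigma> \<cdot> m1p)"
      unfolding B1_notin by (rule fam_comp[OF sY gDn(1) fpB m1(2)])
  next
    fix \<tau> \<sigma> assume t: "\<tau> \<in> boundary (Suc n)" "Suc n \<notin> \<tau>" and s: "\<sigma> \<in> boundary (Suc n)" "Suc n \<in> \<sigma>" and ts: "\<tau> \<subseteq> \<sigma>"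
    have tB: "\<tau> \<in> boundary n" using overlap_Bn[OF t s ts] .
    have tD: "\<tau> \<in> simplices n" using tB BD(1) by blast
    have "rst C Ym n (f n \<cdot> m1x) (\<lambda>i. min i n) \<tau> = leg Ym n \<tau> \<cdot> (f n \<cdot> m1x)" by (rule rst_deg_id[OF sY tD])
    also have "\<dots> = f (sdim \<tau>) \<cdot> (leg Xm n \<tau> \<cdot> m1x)" by (rule leg_nat[OF sX sY f tD m1(1), symmetric])
    also have "\<dots> = pB \<tau> \<cdot> m1p" using D3 tB by simp
    finally show "rst C Ym n (f n \<cdot> m1x) (\<lambda>i. min i n) \<tau> = pB \<tau> \<cdot> m1p" .
  qed
  have fysB: "fam C Z Zm (simplices (Suc n)) M1 (rst C Zm n yB (\<lambda>i. min i n))"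
    by (rule rst_fam[OF sZ subset_refl mono_deg hyB])
  have cB: "\<And>\<sigma>. \<sigma> \<in> boundary (Suc n) \<Longrightarrow> g (sdim \<sigma>) \<cdot> xsB \<sigma> = rst C Zm n yB (\<lambda>i. min i n) \<sigma>"
  proof -
    fix \<sigma> assume s: "\<sigma> \<in> boundary (Suc n)"
    have s1: "\<sigma> \<in> simplices (Suc n)" using s BD(2) by blast
    show "g (sdim \<sigma>) \<cdot> xsB \<sigma> = rst C Zm n yB (\<lambda>i. min i n) \<sigma>"
    proof (cases "Suc n \<in> \<sigma>")
      case True
      have "g (sdim \<sigma>) \<cdot> xsB \<sigma> = rst C Zm n (g n \<cdot> (f n \<cdot> m1x)) (\<lambda>i. min i n) \<sigma>"
        unfolding xsB_def using True rst_smap[OF sY sZ g s1 mono_deg hfx] by simp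
      also have "g n \<cdot> (f n \<cdot> m1x) = gf n \<cdot> m1x" unfolding gfe using hf hg' m1 by (simp add: cs)
      also have "\<dots> = yB" unfolding yB_def using D2 by simp
      finally show ?thesis .
    next
      case False
      have sD: "\<sigma> \<in> simplices n" using B1_notin' s False by blast
      have hbt: "pB {0..n} \<cdot> m1p \<in> hom C M1 (Y n)" using comp_hom[OF m1(2) hpB[OF topn]] sdt by simp
      have "rst C Zm n yB (\<lambda>i. min i n) \<sigma> = leg Zm n \<sigma> \<cdot> yB" by (rule rst_deg_id[OF sZ sD])
      also have "\<dots> = g (sdim \<sigma>) \<cdot> (leg Ym n \<sigma> \<cdot> (pB {0..n} \<cdot> m1p))"
        unfolding yB_def by (rule leg_nat[OF sY sZ g sD hbt, symmetric])
      also have "leg Ym n \<sigma> \<cdot> (pB {0..n} \<cdot> m1p) = (leg Ym n \<sigma> \<cdot> pB {0..n}) \<cdot> m1p"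
        using leg_hom[OF sY sD] hpB[OF topn] sdt m1 by (simp add: cs)
      also have "leg Ym n \<sigma> \<cdot> pB {0..n} = pB \<sigma>" by (rule fam_top[OF sY fpB sD, symmetric])
      finally show ?thesis unfolding xsB_def using False by simp
    qed
  qed
  obtain be where be: "be \<in> hom C M1 Q" "\<forall>\<sigma>\<in>boundary (Suc n). qA \<sigma> \<cdot> be = xsB \<sigma>"
    "\<forall>\<sigma>\<in>simplices (Suc n). qB \<sigma> \<cdot> be = rst C Zm n yB (\<lambda>i. min i n) \<sigma>"
    using rm_ex[OF rmQ oM1 fxsB fysB cB] by blast
  obtain M2 m2y m2m where pb2: "is_pullback C v be M2 m2y m2m" using pb_exists[OF v(1) be(1)] by blast
  have m2mC: "m2m \<in> Cov" by (rule cov_pb[OF vC pb2])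
  have m2: "m2y \<in> hom C M2 (Y (Suc n))" "m2m \<in> hom C M2 M1" "v \<cdot> m2y = be \<cdot> m2m" "M2 \<in> Ob C"
    using pbD[OF pb2] homD[OF v(1)] homD[OF be(1)] by auto
  have E1: "\<forall>\<sigma>\<in>boundary (Suc n). leg Ym (Suc n) \<sigma> \<cdot> m2y = xsB \<sigma> \<cdot> m2m"
  proof
    fix \<sigma> assume s: "\<sigma> \<in> boundary (Suc n)"
    have hs: "qA \<sigma> \<in> hom C Q (Y (sdim \<sigma>))" using famD[OF fqA s] .
    have "leg Ym (Suc n) \<sigma> \<cdot> m2y = (qA \<sigma> \<cdot> v) \<cdot> m2y" using v s by simp
    also have "\<dots> = qA \<sigma> \<cdot> (v \<cdot> m2y)" using hs v m2 by (simp add: cs)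
    also have "\<dots> = qA \<sigma> \<cdot> (be \<cdot> m2m)" using m2 by simp
    also have "\<dots> = (qA \<sigma> \<cdot> be) \<cdot> m2m" using hs be m2 by (simp add: cs)
    finally show "leg Ym (Suc n) \<sigma> \<cdot> m2y = xsB \<sigma> \<cdot> m2m" using be s by simp
  qed
  have hx1: "m1x \<cdot> m2m \<in> hom C M2 (X n)" by (rule comp_hom[OF m2(2) m1(1)])
  have fxsG: "fam C X Xm (horn (Suc n) (Suc n)) M2 (rst C Xm n (m1x \<cdot> m2m) (\<lambda>i. min i n))"
    by (rule rst_fam[OF sX BD(4) mono_deg hx1])
  have fysG: "fam C Y Ym (simplices (Suc n)) M2 (\<lambda>\<sigma>. leg Ym (Suc n) \<sigma> \<cdot> m2y)"
    by (rule fam_comp[OF sY gDn(3) leg_fam[OF sY subset_refl] m2(1)])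
  have cG: "\<And>\<sigma>. \<sigma> \<in> horn (Suc n) (Suc n) \<Longrightarrow> f (sdim \<sigma>) \<cdot> rst C Xm n (m1x \<cdot> m2m) (\<lambda>i. min i n) \<sigma> = leg Ym (Suc n) \<sigma> \<cdot> m2y"
  proof -
    fix \<sigma> assume s: "\<sigma> \<in> horn (Suc n) (Suc n)"
    have s1: "\<sigma> \<in> simplices (Suc n)" using s BD(4) by blast
    have sB: "\<sigma> \<in> boundary (Suc n)" using s BD(3) by blast
    have "f (sdim \<sigma>) \<cdot> rst C Xm n (m1x \<cdot> m2m) (\<lambda>i. min i n) \<sigma> = rst C Ym n (f n \<cdot> (m1x \<cdot> m2m)) (\<lambda>i. min i n) \<sigma>"
      by (rule rst_smap[OF sX sY f s1 mono_deg hx1])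
    also have "\<dots> = xsB \<sigma> \<cdot> m2m"
    proof (cases "Suc n \<in> \<sigma>")
      case True
      have "xsB \<sigma> \<cdot> m2m = rst C Ym n ((f n \<cdot> m1x) \<cdot> m2m) (\<lambda>i. min i n) \<sigma>"
        unfolding xsB_def using True rst_post[OF sY s1 mono_deg hfx m2(2)] by simp
      also have "(f n \<cdot> m1x) \<cdot> m2m = f n \<cdot> (m1x \<cdot> m2m)" using hf m1 m2 by (simp add: cs)
      finally show ?thesis by simp
    next
      case False
      have sBn: "\<sigma> \<in> boundary n" by (rule Hn_notin[OF s False])
      have sD: "\<sigma> \<in> simplices n" using sBn BD(1) by blast
      have "rst C Ym n (f n \<cdot> (m1x \<cdot> m2m)) (\<lambda>i. min i n) \<sigma> = leg Ym n \<sigma> \<cdot> (f n \<cdot> (m1x \<cdot> m2m))"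
        by (rule rst_deg_id[OF sY sD])
      also have "\<dots> = f (sdim \<sigma>) \<cdot> (leg Xm n \<sigma> \<cdot> (m1x \<cdot> m2m))" by (rule leg_nat[OF sX sY f sD hx1, symmetric])
      also have "\<dots> = (f (sdim \<sigma>) \<cdot> (leg Xm n \<sigma> \<cdot> m1x)) \<cdot> m2m"
        using hf leg_hom[OF sX sD] m1 m2 by (simp add: cs)
      also have "\<dots> = xsB \<sigma> \<cdot> m2m" unfolding xsB_def using False D3 sBn by simp
      finally show ?thesis .
    qed
    also have "\<dots> = leg Ym (Suc n) \<sigma> \<cdot> m2y" using E1 sB by simp
    finally show "f (sdim \<sigma>) \<cdot> rst C Xm n (m1x \<cdot> m2m) (\<lambda>i. min i n) \<sigma> = leg Ym (Suc n) \<sigma> \<cdot> m2y" .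
  qed
  obtain ga where ga: "ga \<in> hom C M2 H" "\<forall>\<sigma>\<in>horn (Suc n) (Suc n). hA \<sigma> \<cdot> ga = rst C Xm n (m1x \<cdot> m2m) (\<lambda>i. min i n) \<sigma>"
    "\<forall>\<sigma>\<in>simplices (Suc n). hB \<sigma> \<cdot> ga = leg Ym (Suc n) \<sigma> \<cdot> m2y"
    using rm_ex[OF rmH m2(4) fxsG fysG cG] by blast
  obtain M3 m3v m3m where pb3: "is_pullback C h ga M3 m3v m3m" using pb_exists[OF h(1) ga(1)] by blast
  have m3mC: "m3m \<in> Cov" by (rule cov_pb[OF hC pb3])
  have m3: "m3v \<in> hom C M3 (X (Suc n))" "m3m \<in> hom C M3 M2" "h \<cdot> m3v = ga \<cdot> m3m" "M3 \<in> Ob C"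
    using pbD[OF pb3] homD[OF h(1)] homD[OF ga(1)] by auto
  define x0 where "x0 = m1x \<cdot> (m2m \<cdot> m3m)"
  have hx0: "x0 \<in> hom C M3 (X n)" unfolding x0_def by (rule comp_hom[OF comp_hom[OF m3(2) m2(2)] m1(1)])
  have G1: "\<forall>\<sigma>\<in>horn (Suc n) (Suc n). leg Xm (Suc n) \<sigma> \<cdot> m3v = rst C Xm n x0 (\<lambda>i. min i n) \<sigma>"
  proof
    fix \<sigma> assume s: "\<sigma> \<in> horn (Suc n) (Suc n)"
    have s1: "\<sigma> \<in> simplices (Suc n)" using s BD(4) by blast
    have hs: "hA \<sigma> \<in> hom C H (X (sdim \<sigma>))" using famD[OF fhA s] .
    have "leg Xm (Suc n) \<sigma> \<cdot> m3v = (hA \<sigma> \<cdot> h) \<cdot> m3v" using h s by simp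
    also have "\<dots> = hA \<sigma> \<cdot> (h \<cdot> m3v)" using hs h m3 by (simp add: cs)
    also have "\<dots> = hA \<sigma> \<cdot> (ga \<cdot> m3m)" using m3 by simp
    also have "\<dots> = (hA \<sigma> \<cdot> ga) \<cdot> m3m" using hs ga m3 by (simp add: cs)
    also have "\<dots> = rst C Xm n (m1x \<cdot> m2m) (\<lambda>i. min i n) \<sigma> \<cdot> m3m" using ga s by simp
    also have "\<dots> = rst C Xm n ((m1x \<cdot> m2m) \<cdot> m3m) (\<lambda>i. min i n) \<sigma>" by (rule rst_post[OF sX s1 mono_deg hx1 m3(2)])
    also have "(m1x \<cdot> m2m) \<cdot> m3m = x0" unfolding x0_def using m1 m2 m3 by (simp add: cs)
    finally show "leg Xm (Suc n) \<sigma> \<cdot> m3v = rst C Xm n x0 (\<lambda>i. min i n) \<sigma>" .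
  qed
  have G2: "\<forall>\<sigma>\<in>simplices (Suc n). f (sdim \<sigma>) \<cdot> (leg Xm (Suc n) \<sigma> \<cdot> m3v) = leg Ym (Suc n) \<sigma> \<cdot> (m2y \<cdot> m3m)"
  proof
    fix \<sigma> assume s: "\<sigma> \<in> simplices (Suc n)"
    have hs: "hB \<sigma> \<in> hom C H (Y (sdim \<sigma>))" using famD[OF fhB s] .
    have "f (sdim \<sigma>) \<cdot> (leg Xm (Suc n) \<sigma> \<cdot> m3v) = (f (sdim \<sigma>) \<cdot> leg Xm (Suc n) \<sigma>) \<cdot> m3v"
      using hf leg_hom[OF sX s] m3 by (simp add: cs)
    also have "\<dots> = (hB \<sigma> \<cdot> h) \<cdot> m3v" using h s by simp
    also have "\<dots> = hB \<sigma> \<cdot> (h \<cdot> m3v)" using hs h m3 by (simp add: cs)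
    also have "\<dots> = hB \<sigma> \<cdot> (ga \<cdot> m3m)" using m3 by simp
    also have "\<dots> = (hB \<sigma> \<cdot> ga) \<cdot> m3m" using hs ga m3 by (simp add: cs)
    also have "\<dots> = (leg Ym (Suc n) \<sigma> \<cdot> m2y) \<cdot> m3m" using ga s by simp
    also have "\<dots> = leg Ym (Suc n) \<sigma> \<cdot> (m2y \<cdot> m3m)" using leg_hom[OF sY s] m2 m3 by (simp add: cs)
    finally show "f (sdim \<sigma>) \<cdot> (leg Xm (Suc n) \<sigma> \<cdot> m3v) = leg Ym (Suc n) \<sigma> \<cdot> (m2y \<cdot> m3m)" .
  qed
  define e where "e = m1p \<cdot> (m2m \<cdot> m3m)"
  have he: "e \<in> hom C M3 P" unfolding e_def by (rule comp_hom[OF comp_hom[OF m3(2) m2(2)] m1(2)])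
  have eC: "e \<in> Cov" unfolding e_def
    by (rule cov_comp[OF cov_comp[OF m3mC m2mC m3(2) m2(2)] m1pC comp_hom[OF m3(2) m2(2)] m1(2)])
  define dX where "dX = Xm n (Suc n) (\<lambda>i. i)"
  have hdX: "dX \<in> hom C (X (Suc n)) (X n)" unfolding dX_def by (rule sXm_hom[OF sX mono_face])
  define c where "c = dX \<cdot> m3v"
  have hc: "c \<in> hom C M3 (X n)" unfolding c_def by (rule comp_hom[OF m3(1) hdX])
  have legc: "\<And>\<sigma>. \<sigma> \<in> simplices n \<Longrightarrow> leg Xm n \<sigma> \<cdot> c = leg Xm (Suc n) \<sigma> \<cdot> m3v"
    unfolding c_def dX_def using face_leg[OF sX _ m3(1)] by blast
  have CA: "\<forall>\<sigma>\<in>boundary n. leg Xm n \<sigma> \<cdot> c = leg Xm n \<sigma> \<cdot> x0"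
  proof
    fix \<sigma> assume s: "\<sigma> \<in> boundary n"
    have sD: "\<sigma> \<in> simplices n" using s BD(1) by blast
    have "leg Xm n \<sigma> \<cdot> c = leg Xm (Suc n) \<sigma> \<cdot> m3v" by (rule legc[OF sD])
    also have "\<dots> = rst C Xm n x0 (\<lambda>i. min i n) \<sigma>" using G1 Bn_Hn[OF s] by simp
    also have "\<dots> = leg Xm n \<sigma> \<cdot> x0" by (rule rst_deg_id[OF sX sD])
    finally show "leg Xm n \<sigma> \<cdot> c = leg Xm n \<sigma> \<cdot> x0" .
  qed
  have CB: "\<forall>\<sigma>\<in>simplices n. f (sdim \<sigma>) \<cdot> (leg Xm n \<sigma> \<cdot> c) = pB \<sigma> \<cdot> e"
  proof
    fix \<sigma> assume sD: "\<sigma> \<in> simplices n"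
    have s1: "\<sigma> \<in> simplices (Suc n)" using sD Dn_sub_D1 by blast
    have sB: "\<sigma> \<in> boundary (Suc n)" "Suc n \<notin> \<sigma>" using Dn_B1[OF sD] by blast+
    have "f (sdim \<sigma>) \<cdot> (leg Xm n \<sigma> \<cdot> c) = f (sdim \<sigma>) \<cdot> (leg Xm (Suc n) \<sigma> \<cdot> m3v)" using legc[OF sD] by simp
    also have "\<dots> = leg Ym (Suc n) \<sigma> \<cdot> (m2y \<cdot> m3m)" using G2 s1 by simp
    also have "\<dots> = (leg Ym (Suc n) \<sigma> \<cdot> m2y) \<cdot> m3m" using leg_hom[OF sY s1] m2 m3 by (simp add: cs)
    also have "\<dots> = (xsB \<sigma> \<cdot> m2m) \<cdot> m3m" using E1 sB by simp
    also have "\<dots> = ((pB \<sigma> \<cdot> m1p) \<cdot> m2m) \<cdot> m3m" unfolding xsB_def using sB by simp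
    also have "\<dots> = pB \<sigma> \<cdot> e" unfolding e_def using hpB[OF sD] m1 m2 m3 by (simp add: cs)
    finally show "f (sdim \<sigma>) \<cdot> (leg Xm n \<sigma> \<cdot> c) = pB \<sigma> \<cdot> e" .
  qed
  have uce: "u \<cdot> c = e"
  proof (rule rm_uniq[OF rmP comp_hom[OF hc u] he])
    fix \<sigma> assume s: "\<sigma> \<in> boundary n"
    have sD: "\<sigma> \<in> simplices n" using s BD(1) by blast
    have "pA \<sigma> \<cdot> (u \<cdot> c) = (pA \<sigma> \<cdot> u) \<cdot> c" using hpA[OF s] u hc by (simp add: cs)
    also have "\<dots> = leg Xm n \<sigma> \<cdot> c" using uA s by simp
    also have "\<dots> = leg Xm n \<sigma> \<cdot> x0" using CA s by simp
    also have "\<dots> = (leg Xm n \<sigma> \<cdot> m1x) \<cdot> (m2m \<cdot> m3m)" unfolding x0_def using leg_hom[OF sX sD] m1 m2 m3 by (simp add: cs)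
    also have "\<dots> = (pA \<sigma> \<cdot> m1p) \<cdot> (m2m \<cdot> m3m)" using D1 s by simp
    also have "\<dots> = pA \<sigma> \<cdot> e" unfolding e_def using hpA[OF s] m1 m2 m3 by (simp add: cs)
    finally show "pA \<sigma> \<cdot> (u \<cdot> c) = pA \<sigma> \<cdot> e" .
  next
    fix \<sigma> assume sD: "\<sigma> \<in> simplices n"
    have "pB \<sigma> \<cdot> (u \<cdot> c) = (pB \<sigma> \<cdot> u) \<cdot> c" using hpB[OF sD] u hc by (simp add: cs)
    also have "\<dots> = (f (sdim \<sigma>) \<cdot> leg Xm n \<sigma>) \<cdot> c" using uB sD by simp
    also have "\<dots> = f (sdim \<sigma>) \<cdot> (leg Xm n \<sigma> \<cdot> c)" using hf leg_hom[OF sX sD] hc by (simp add: cs)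
    finally show "pB \<sigma> \<cdot> (u \<cdot> c) = pB \<sigma> \<cdot> e" using CB sD by simp
  qed
  obtain K k1 k2 where pbK: "is_pullback C u' u' K k1 k2" using pb_exists[OF u'(1) u'(1)] by blast
  have k2C: "k2 \<in> Cov" by (rule cov_pb[OF u'C pbK])
  have kk: "k1 \<in> hom C K (X n)" "k2 \<in> hom C K (X n)" "u' \<cdot> k1 = u' \<cdot> k2" "K \<in> Ob C"
    using pbD[OF pbK] homD[OF u'(1)] by auto
  have hleg: "\<And>\<sigma> m. \<sigma> \<in> simplices m \<Longrightarrow> leg Xm m \<sigma> \<in> hom C (X m) (X (sdim \<sigma>))" using leg_hom[OF sX] .
  have u'eqD: "(\<forall>\<sigma>\<in>boundary n. leg Xm n \<sigma> \<cdot> w1 = leg Xm n \<sigma> \<cdot> w2) \<and> gf n \<cdot> w1 = gf n \<cdot> w2"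
    if w: "w1 \<in> hom C W (X n)" "w2 \<in> hom C W (X n)" "u' \<cdot> w1 = u' \<cdot> w2" for W w1 w2
  proof (intro conjI ballI)
    fix \<sigma> assume s: "\<sigma> \<in> boundary n"
    have hs: "pA' \<sigma> \<in> hom C P' (X (sdim \<sigma>))" using famD[OF fpA' s] .
    have "leg Xm n \<sigma> \<cdot> w1 = (pA' \<sigma> \<cdot> u') \<cdot> w1" using u' s by simp
    also have "\<dots> = pA' \<sigma> \<cdot> (u' \<cdot> w1)" using hs u' w by (simp add: cs)
    also have "\<dots> = pA' \<sigma> \<cdot> (u' \<cdot> w2)" using w by simp
    also have "\<dots> = (pA' \<sigma> \<cdot> u') \<cdot> w2" using hs u' w by (simp add: cs)
    finally show "leg Xm n \<sigma> \<cdot> w1 = leg Xm n \<sigma> \<cdot> w2" using u' s by simp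
  next
    have hs: "pB' {0..n} \<in> hom C P' (Z n)" using famD[OF fpB' topn] sdt by simp
    have gl: "gf n \<cdot> leg Xm n {0..n} = gf n" using leg_top[OF sX] idr[OF hgf] by simp
    have "gf n \<cdot> w1 = (pB' {0..n} \<cdot> u') \<cdot> w1" using u' topn sdt gl by simp
    also have "\<dots> = pB' {0..n} \<cdot> (u' \<cdot> w1)" using hs u' w by (simp add: cs)
    also have "\<dots> = pB' {0..n} \<cdot> (u' \<cdot> w2)" using w by simp
    also have "\<dots> = (pB' {0..n} \<cdot> u') \<cdot> w2" using hs u' w by (simp add: cs)
    finally show "gf n \<cdot> w1 = gf n \<cdot> w2" using u' topn sdt gl by simp
  qed
  have u'eqI: "u' \<cdot> w1 = u' \<cdot> w2"
    if w: "w1 \<in> hom C W (X n)" "w2 \<in> hom C W (X n)" "\<forall>\<sigma>\<in>boundary n. leg Xm n \<sigma> \<cdot> w1 = leg Xm n \<sigma> \<cdot> w2"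
       "gf n \<cdot> w1 = gf n \<cdot> w2" for W w1 w2
  proof (rule rm_uniq[OF rmP' comp_hom[OF w(1) u'(1)] comp_hom[OF w(2) u'(1)]])
    fix \<sigma> assume s: "\<sigma> \<in> boundary n"
    have hs: "pA' \<sigma> \<in> hom C P' (X (sdim \<sigma>))" using famD[OF fpA' s] .
    have "pA' \<sigma> \<cdot> (u' \<cdot> w1) = (pA' \<sigma> \<cdot> u') \<cdot> w1" using hs u' w by (simp add: cs)
    also have "\<dots> = leg Xm n \<sigma> \<cdot> w2" using u' s w by simp
    also have "\<dots> = (pA' \<sigma> \<cdot> u') \<cdot> w2" using u' s by simp
    also have "\<dots> = pA' \<sigma> \<cdot> (u' \<cdot> w2)" using hs u' w by (simp add: cs)
    finally show "pA' \<sigma> \<cdot> (u' \<cdot> w1) = pA' \<sigma> \<cdot> (u' \<cdot> w2)" .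
  next
    fix \<sigma> assume s: "\<sigma> \<in> simplices n"
    have hs: "pB' \<sigma> \<in> hom C P' (Z (sdim \<sigma>))" using famD[OF fpB' s] .
    have "pB' \<sigma> \<cdot> (u' \<cdot> w1) = (pB' \<sigma> \<cdot> u') \<cdot> w1" using hs u' w by (simp add: cs)
    also have "\<dots> = (gf (sdim \<sigma>) \<cdot> leg Xm n \<sigma>) \<cdot> w1" using u' s by simp
    also have "\<dots> = gf (sdim \<sigma>) \<cdot> (leg Xm n \<sigma> \<cdot> w1)" using hgf hleg[OF s] w by (simp add: cs)
    also have "\<dots> = leg Zm n \<sigma> \<cdot> (gf n \<cdot> w1)" by (rule leg_nat[OF sX sZ sgf s w(1)])
    also have "\<dots> = leg Zm n \<sigma> \<cdot> (gf n \<cdot> w2)" using w by simp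
    also have "\<dots> = gf (sdim \<sigma>) \<cdot> (leg Xm n \<sigma> \<cdot> w2)" by (rule leg_nat[OF sX sZ sgf s w(2), symmetric])
    also have "\<dots> = (gf (sdim \<sigma>) \<cdot> leg Xm n \<sigma>) \<cdot> w2" using hgf hleg[OF s] w by (simp add: cs)
    also have "\<dots> = (pB' \<sigma> \<cdot> u') \<cdot> w2" using u' s by simp
    also have "\<dots> = pB' \<sigma> \<cdot> (u' \<cdot> w2)" using hs u' w by (simp add: cs)
    finally show "pB' \<sigma> \<cdot> (u' \<cdot> w1) = pB' \<sigma> \<cdot> (u' \<cdot> w2)" .
  qed
  have K12: "(\<forall>\<sigma>\<in>boundary n. leg Xm n \<sigma> \<cdot> k1 = leg Xm n \<sigma> \<cdot> k2) \<and> gf n \<cdot> k1 = gf n \<cdot> k2"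
    by (rule u'eqD[OF kk(1,2,3)])
  have K1: "\<forall>\<sigma>\<in>boundary n. leg Xm n \<sigma> \<cdot> k1 = leg Xm n \<sigma> \<cdot> k2" and K2: "gf n \<cdot> k1 = gf n \<cdot> k2" using K12 by blast+
  define xsD where "xsD = (\<lambda>\<sigma>. if Suc n \<in> \<sigma> then rst C Xm n k1 (\<lambda>i. min i n) \<sigma> else leg Xm n \<sigma> \<cdot> k2)"
  have hgk: "gf n \<cdot> k2 \<in> hom C K (Z n)" by (rule comp_hom[OF kk(2) hgf])
  have fxsD: "fam C X Xm (boundary (Suc n)) K xsD" unfolding xsD_def
  proof (rule fam_glue)
    show "fam C X Xm (boundary (Suc n)) K (rst C Xm n k1 (\<lambda>i. min i n))"
      by (rule rst_fam[OF sX BD(2) mono_deg kk(1)])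
    show "fam C X Xm {\<sigma> \<in> boundary (Suc n). Suc n \<notin> \<sigma>} K (\<lambda>\<sigma>. leg Xm n \<sigma> \<cdot> k2)"
      unfolding B1_notin by (rule fam_comp[OF sX gDn(1) leg_fam[OF sX subset_refl] kk(2)])
  next
    fix \<tau> \<sigma> assume t: "\<tau> \<in> boundary (Suc n)" "Suc n \<notin> \<tau>" and s: "\<sigma> \<in> boundary (Suc n)" "Suc n \<in> \<sigma>" and ts: "\<tau> \<subseteq> \<sigma>"
    have tB: "\<tau> \<in> boundary n" using overlap_Bn[OF t s ts] .
    have tD: "\<tau> \<in> simplices n" using tB BD(1) by blast
    show "rst C Xm n k1 (\<lambda>i. min i n) \<tau> = leg Xm n \<tau> \<cdot> k2"
      using rst_deg_id[OF sX tD] K1 tB by simp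
  qed
  have fysD: "fam C Z Zm (simplices (Suc n)) K (rst C Zm n (gf n \<cdot> k2) (\<lambda>i. min i n))"
    by (rule rst_fam[OF sZ subset_refl mono_deg hgk])
  have cD: "\<And>\<sigma>. \<sigma> \<in> boundary (Suc n) \<Longrightarrow> gf (sdim \<sigma>) \<cdot> xsD \<sigma> = rst C Zm n (gf n \<cdot> k2) (\<lambda>i. min i n) \<sigma>"
  proof -
    fix \<sigma> assume s: "\<sigma> \<in> boundary (Suc n)"
    have s1: "\<sigma> \<in> simplices (Suc n)" using s BD(2) by blast
    show "gf (sdim \<sigma>) \<cdot> xsD \<sigma> = rst C Zm n (gf n \<cdot> k2) (\<lambda>i. min i n) \<sigma>"
    proof (cases "Suc n \<in> \<sigma>")
      case True
      then show ?thesis unfolding xsD_def using rst_smap[OF sX sZ sgf s1 mono_deg kk(1)] K2 by simp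
    next
      case False
      have sD: "\<sigma> \<in> simplices n" using B1_notin' s False by blast
      show ?thesis unfolding xsD_def using False leg_nat[OF sX sZ sgf sD kk(2)] rst_deg_id[OF sZ sD] by simp
    qed
  qed
  obtain de where de: "de \<in> hom C K P''" "\<forall>\<sigma>\<in>boundary (Suc n). pA'' \<sigma> \<cdot> de = xsD \<sigma>"
    "\<forall>\<sigma>\<in>simplices (Suc n). pB'' \<sigma> \<cdot> de = rst C Zm n (gf n \<cdot> k2) (\<lambda>i. min i n) \<sigma>"
    using rm_ex[OF rmP'' kk(4) fxsD fysD cD] by blast
  have hbt: "pB {0..n} \<in> hom C P (Y n)" using hpB[OF topn] sdt by simp
  have FC: "f n \<cdot> c = pB {0..n} \<cdot> e"
  proof -
    have "f n \<cdot> c = f (sdim {0..n}) \<cdot> (leg Xm n {0..n} \<cdot> c)" using leg_top[OF sX] idl hc sdt by simp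
    then show ?thesis using CB topn by simp
  qed
  have GFC: "gf n \<cdot> c = gf n \<cdot> x0"
  proof -
    have "gf n \<cdot> c = g n \<cdot> (f n \<cdot> c)" unfolding gfe using hf hg' hc by (simp add: cs)
    also have "\<dots> = g n \<cdot> (pB {0..n} \<cdot> e)" using FC by simp
    also have "\<dots> = (g n \<cdot> (pB {0..n} \<cdot> m1p)) \<cdot> (m2m \<cdot> m3m)" unfolding e_def using hg' hbt m1 m2 m3 by (simp add: cs)
    also have "\<dots> = (gf n \<cdot> m1x) \<cdot> (m2m \<cdot> m3m)" using D2 by simp
    also have "\<dots> = gf n \<cdot> x0" unfolding x0_def using hgf m1 m2 m3 by (simp add: cs)
    finally show ?thesis .
  qed
  have eqk: "u' \<cdot> x0 = u' \<cdot> c" using u'eqI[OF hx0 hc] CA GFC by simp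
  have du': "Dom C u' = X n" using homD[OF u'(1)] by blast
  obtain ka where ka: "ka \<in> hom C M3 K" "k1 \<cdot> ka = x0" "k2 \<cdot> ka = c"
    using pb_ex[OF pbK] hx0 hc du' eqk by metis
  have topred: "\<forall>\<sigma>\<in>simplices (Suc n). F \<sigma> \<cdot> r1 = F \<sigma> \<cdot> r2"
    if F: "fam C Z Zm (simplices (Suc n)) W F" and r: "r1 \<in> hom C W' W" "r2 \<in> hom C W' W"
      and t: "F {0..Suc n} \<cdot> r1 = F {0..Suc n} \<cdot> r2" for W W' F r1 r2
  proof
    fix \<sigma> assume s: "\<sigma> \<in> simplices (Suc n)"
    have ht: "F {0..Suc n} \<in> hom C W (Z (Suc n))" using famD[OF F top1] sdt by simp
    have hl: "leg Zm (Suc n) \<sigma> \<in> hom C (Z (Suc n)) (Z (sdim \<sigma>))" by (rule leg_hom[OF sZ s])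
    have "F \<sigma> \<cdot> r1 = (leg Zm (Suc n) \<sigma> \<cdot> F {0..Suc n}) \<cdot> r1" using fam_top[OF sZ F s] by simp
    also have "\<dots> = leg Zm (Suc n) \<sigma> \<cdot> (F {0..Suc n} \<cdot> r1)" using hl ht r by (simp add: cs)
    also have "\<dots> = leg Zm (Suc n) \<sigma> \<cdot> (F {0..Suc n} \<cdot> r2)" using t by simp
    also have "\<dots> = (leg Zm (Suc n) \<sigma> \<cdot> F {0..Suc n}) \<cdot> r2" using hl ht r by (simp add: cs)
    also have "\<dots> = F \<sigma> \<cdot> r2" using fam_top[OF sZ F s] by simp
    finally show "F \<sigma> \<cdot> r1 = F \<sigma> \<cdot> r2" .
  qed
  have F3: "m2y \<cdot> m3m = f (Suc n) \<cdot> m3v"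
  proof -
    have "f (sdim {0..Suc n}) \<cdot> (leg Xm (Suc n) {0..Suc n} \<cdot> m3v) = leg Ym (Suc n) {0..Suc n} \<cdot> (m2y \<cdot> m3m)"
      using G2 top1 by simp
    then show ?thesis using leg_top[OF sX] leg_top[OF sY] idl m3 comp_hom[OF m3(2) m2(1)] sdt by simp
  qed
  have hyB2: "yB \<cdot> (m2m \<cdot> m3m) = gf n \<cdot> c"
  proof -
    have "yB \<cdot> (m2m \<cdot> m3m) = g n \<cdot> (pB {0..n} \<cdot> e)" unfolding yB_def e_def using hg' hbt m1 m2 m3 by (simp add: cs)
    also have "\<dots> = g n \<cdot> (f n \<cdot> c)" using FC by simp
    also have "\<dots> = gf n \<cdot> c" unfolding gfe using hf hg' hc by (simp add: cs)
    finally show ?thesis .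
  qed
  have TOP: "gf (Suc n) \<cdot> m3v = rst C Zm n (gf n \<cdot> c) (\<lambda>i. min i n) {0..Suc n}"
  proof -
    have hqb: "qB {0..Suc n} \<in> hom C Q (Z (Suc n))" using famD[OF fqB top1] sdt by simp
    have gv: "qB {0..Suc n} \<cdot> v = g (Suc n)" using v top1 leg_top[OF sY] idr[OF hg'] sdt by simp
    have "gf (Suc n) \<cdot> m3v = g (Suc n) \<cdot> (f (Suc n) \<cdot> m3v)" unfolding gfe using hf hg' m3 by (simp add: cs)
    also have "\<dots> = g (Suc n) \<cdot> (m2y \<cdot> m3m)" using F3 by simp
    also have "\<dots> = (qB {0..Suc n} \<cdot> v) \<cdot> (m2y \<cdot> m3m)" using gv by simp
    also have "\<dots> = qB {0..Suc n} \<cdot> ((v \<cdot> m2y) \<cdot> m3m)" using hqb v(1) m2(1,2) m3(1,2) by (simp add: cs)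
    also have "\<dots> = qB {0..Suc n} \<cdot> ((be \<cdot> m2m) \<cdot> m3m)" using m2 by simp
    also have "\<dots> = (qB {0..Suc n} \<cdot> be) \<cdot> (m2m \<cdot> m3m)" using hqb be(1) m2(1,2) m3(1,2) by (simp add: cs)
    also have "\<dots> = rst C Zm n yB (\<lambda>i. min i n) {0..Suc n} \<cdot> (m2m \<cdot> m3m)" using be top1 by simp
    also have "\<dots> = rst C Zm n (yB \<cdot> (m2m \<cdot> m3m)) (\<lambda>i. min i n) {0..Suc n}"
      by (rule rst_post[OF sZ top1 mono_deg hyB comp_hom[OF m3(2) m2(2)]])
    finally show ?thesis using hyB2 by simp
  qed
  have sq: "u'' \<cdot> m3v = de \<cdot> ka"
  proof (rule rm_uniq[OF rmP'' comp_hom[OF m3(1) u''(1)] comp_hom[OF ka(1) de(1)]])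
    fix \<sigma> assume s: "\<sigma> \<in> boundary (Suc n)"
    have s1: "\<sigma> \<in> simplices (Suc n)" using s BD(2) by blast
    have hs: "pA'' \<sigma> \<in> hom C P'' (X (sdim \<sigma>))" using famD[OF fpA'' s] .
    have "pA'' \<sigma> \<cdot> (u'' \<cdot> m3v) = (pA'' \<sigma> \<cdot> u'') \<cdot> m3v" using hs u'' m3 by (simp add: cs)
    also have "\<dots> = leg Xm (Suc n) \<sigma> \<cdot> m3v" using u'' s by simp
    also have "\<dots> = xsD \<sigma> \<cdot> ka"
    proof (cases "Suc n \<in> \<sigma>")
      case True
      have "xsD \<sigma> \<cdot> ka = rst C Xm n (k1 \<cdot> ka) (\<lambda>i. min i n) \<sigma>"
        unfolding xsD_def using True rst_post[OF sX s1 mono_deg kk(1) ka(1)] by simp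
      also have "\<dots> = leg Xm (Suc n) \<sigma> \<cdot> m3v" using ka G1 B1_in_Hn[OF s True] by simp
      finally show ?thesis by simp
    next
      case False
      have sD: "\<sigma> \<in> simplices n" using B1_notin' s False by blast
      have "xsD \<sigma> \<cdot> ka = leg Xm n \<sigma> \<cdot> (k2 \<cdot> ka)" unfolding xsD_def using False hleg[OF sD] kk ka by (simp add: cs)
      also have "\<dots> = leg Xm (Suc n) \<sigma> \<cdot> m3v" using ka legc[OF sD] by simp
      finally show ?thesis by simp
    qed
    also have "\<dots> = (pA'' \<sigma> \<cdot> de) \<cdot> ka" using de s by simp
    also have "\<dots> = pA'' \<sigma> \<cdot> (de \<cdot> ka)" using hs de ka by (simp add: cs)
    finally show "pA'' \<sigma> \<cdot> (u'' \<cdot> m3v) = pA'' \<sigma> \<cdot> (de \<cdot> ka)" .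
  next
    have t: "pB'' {0..Suc n} \<cdot> (u'' \<cdot> m3v) = pB'' {0..Suc n} \<cdot> (de \<cdot> ka)"
    proof -
      have hs: "pB'' {0..Suc n} \<in> hom C P'' (Z (Suc n))" using famD[OF fpB'' top1] sdt by simp
      have gl: "gf (Suc n) \<cdot> leg Xm (Suc n) {0..Suc n} = gf (Suc n)" using leg_top[OF sX] idr[OF hgf] by simp
      have "pB'' {0..Suc n} \<cdot> (u'' \<cdot> m3v) = (pB'' {0..Suc n} \<cdot> u'') \<cdot> m3v" using hs u'' m3 by (simp add: cs)
      also have "\<dots> = gf (Suc n) \<cdot> m3v" using u'' top1 sdt gl by simp
      also have "\<dots> = rst C Zm n (gf n \<cdot> c) (\<lambda>i. min i n) {0..Suc n}" by (rule TOP)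
      also have "\<dots> = rst C Zm n ((gf n \<cdot> k2) \<cdot> ka) (\<lambda>i. min i n) {0..Suc n}"
        using ka hgf kk by (simp add: cs)
      also have "\<dots> = rst C Zm n (gf n \<cdot> k2) (\<lambda>i. min i n) {0..Suc n} \<cdot> ka"
        by (rule rst_post[OF sZ top1 mono_deg hgk ka(1), symmetric])
      also have "\<dots> = (pB'' {0..Suc n} \<cdot> de) \<cdot> ka" using de top1 by simp
      also have "\<dots> = pB'' {0..Suc n} \<cdot> (de \<cdot> ka)" using hs de ka by (simp add: cs)
      finally show ?thesis .
    qed
    fix \<sigma> assume s: "\<sigma> \<in> simplices (Suc n)"
    show "pB'' \<sigma> \<cdot> (u'' \<cdot> m3v) = pB'' \<sigma> \<cdot> (de \<cdot> ka)"
      using topred[OF fpB'' comp_hom[OF m3(1) u''(1)] comp_hom[OF ka(1) de(1)] t] s by blast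
  qed
  \<comment> \<open>M3 is the pullback of u'' along delta\<close>
  have du'': "Dom C u'' = X (Suc n)" "Cod C u'' = P''" using homD[OF u''(1)] by blast+
  have dde: "Dom C de = K" "Cod C de = P''" using homD[OF de(1)] by blast+
  have uniqM3: "mm1 = mm2" if mm: "mm1 \<in> hom C W M3" "mm2 \<in> hom C W M3" "m3v \<cdot> mm1 = m3v \<cdot> mm2" "ka \<cdot> mm1 = ka \<cdot> mm2"
    for W mm1 mm2
  proof (rule pb_uniq[OF pb3 mm(1,2,3)])
    have a1: "m2m \<cdot> (m3m \<cdot> mm1) = m2m \<cdot> (m3m \<cdot> mm2)"
    proof (rule pb_uniq[OF pb1 comp_hom[OF comp_hom[OF mm(1) m3(2)] m2(2)] comp_hom[OF comp_hom[OF mm(2) m3(2)] m2(2)]])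
      have "m1x \<cdot> (m2m \<cdot> (m3m \<cdot> mm1)) = (k1 \<cdot> ka) \<cdot> mm1" unfolding ka(2) x0_def using m1 m2 m3 mm by (simp add: cs)
      also have "\<dots> = k1 \<cdot> (ka \<cdot> mm1)" using kk(1,2) ka(1) mm(1,2) by (simp add: cs)
      also have "\<dots> = k1 \<cdot> (ka \<cdot> mm2)" using mm by simp
      also have "\<dots> = (k1 \<cdot> ka) \<cdot> mm2" using kk(1,2) ka(1) mm(1,2) by (simp add: cs)
      also have "\<dots> = m1x \<cdot> (m2m \<cdot> (m3m \<cdot> mm2))" unfolding ka(2) x0_def using m1 m2 m3 mm by (simp add: cs)
      finally show "m1x \<cdot> (m2m \<cdot> (m3m \<cdot> mm1)) = m1x \<cdot> (m2m \<cdot> (m3m \<cdot> mm2))" .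
    next
      have "m1p \<cdot> (m2m \<cdot> (m3m \<cdot> mm1)) = (u \<cdot> (k2 \<cdot> ka)) \<cdot> mm1" unfolding ka(3) uce e_def using m1 m2 m3 mm by (simp add: cs)
      also have "\<dots> = u \<cdot> (k2 \<cdot> (ka \<cdot> mm1))" using u kk(1,2) ka(1) mm(1,2) by (simp add: cs)
      also have "\<dots> = u \<cdot> (k2 \<cdot> (ka \<cdot> mm2))" using mm by simp
      also have "\<dots> = (u \<cdot> (k2 \<cdot> ka)) \<cdot> mm2" using u kk(1,2) ka(1) mm(1,2) by (simp add: cs)
      also have "\<dots> = m1p \<cdot> (m2m \<cdot> (m3m \<cdot> mm2))" unfolding ka(3) uce e_def using m1 m2 m3 mm by (simp add: cs)
      finally show "m1p \<cdot> (m2m \<cdot> (m3m \<cdot> mm1)) = m1p \<cdot> (m2m \<cdot> (m3m \<cdot> mm2))" .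
    qed
    show "m3m \<cdot> mm1 = m3m \<cdot> mm2"
    proof (rule pb_uniq[OF pb2 comp_hom[OF mm(1) m3(2)] comp_hom[OF mm(2) m3(2)] _ a1])
      have "m2y \<cdot> (m3m \<cdot> mm1) = (m2y \<cdot> m3m) \<cdot> mm1" using m2(1) m3(2) mm(1) by (simp add: cs)
      also have "\<dots> = (f (Suc n) \<cdot> m3v) \<cdot> mm1" using F3 by simp
      also have "\<dots> = f (Suc n) \<cdot> (m3v \<cdot> mm1)" using hf m3(1) mm(1) by (simp add: cs)
      also have "\<dots> = f (Suc n) \<cdot> (m3v \<cdot> mm2)" using mm by simp
      also have "\<dots> = (f (Suc n) \<cdot> m3v) \<cdot> mm2" using hf m3(1) mm(2) by (simp add: cs)
      also have "\<dots> = (m2y \<cdot> m3m) \<cdot> mm2" using F3 by simp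
      also have "\<dots> = m2y \<cdot> (m3m \<cdot> mm2)" using m2(1) m3(2) mm(2) by (simp add: cs)
      finally show "m2y \<cdot> (m3m \<cdot> mm1) = m2y \<cdot> (m3m \<cdot> mm2)" .
    qed
  qed
  have PB3: "is_pullback C u'' de M3 m3v ka"
    unfolding is_pullback_def
  proof (intro conjI allI impI)
    show "u'' \<in> Ar C" "de \<in> Ar C" using homD u''(1) de(1) by blast+
    show "Cod C u'' = Cod C de" using du'' dde by simp
    show "m3v \<in> hom C M3 (Dom C u'')" using m3 du'' by simp
    show "ka \<in> hom C M3 (Dom C de)" using ka dde by simp
    show "u'' \<cdot> m3v = de \<cdot> ka" by (rule sq)
  next
    fix W z1 z2 assume zz: "z1 \<in> hom C W (Dom C u'') \<and> z2 \<in> hom C W (Dom C de) \<and> u'' \<cdot> z1 = de \<cdot> z2"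
    have z1: "z1 \<in> hom C W (X (Suc n))" and z2: "z2 \<in> hom C W K" and zq: "u'' \<cdot> z1 = de \<cdot> z2"
      using zz du'' dde by auto
    have oW: "W \<in> Ob C" using hom_ob z1 by blast
    define xa where "xa = k1 \<cdot> z2"
    define xb where "xb = k2 \<cdot> z2"
    have hxa: "xa \<in> hom C W (X n)" unfolding xa_def by (rule comp_hom[OF z2 kk(1)])
    have hxb: "xb \<in> hom C W (X n)" unfolding xb_def by (rule comp_hom[OF z2 kk(2)])
    have UA: "leg Xm (Suc n) \<sigma> \<cdot> z1 = xsD \<sigma> \<cdot> z2" if s: "\<sigma> \<in> boundary (Suc n)" for \<sigma>
    proof -
      have hs: "pA'' \<sigma> \<in> hom C P'' (X (sdim \<sigma>))" using famD[OF fpA'' s] .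
      have "leg Xm (Suc n) \<sigma> \<cdot> z1 = (pA'' \<sigma> \<cdot> u'') \<cdot> z1" using u'' s by simp
      also have "\<dots> = pA'' \<sigma> \<cdot> (u'' \<cdot> z1)" using hs u'' z1 by (simp add: cs)
      also have "\<dots> = pA'' \<sigma> \<cdot> (de \<cdot> z2)" using zq by simp
      also have "\<dots> = (pA'' \<sigma> \<cdot> de) \<cdot> z2" using hs de z2 by (simp add: cs)
      finally show ?thesis using de s by simp
    qed
    have U1: "leg Xm (Suc n) \<sigma> \<cdot> z1 = rst C Xm n xa (\<lambda>i. min i n) \<sigma>"
      if s: "\<sigma> \<in> boundary (Suc n)" "Suc n \<in> \<sigma>" for \<sigma>
    proof -
      have s1: "\<sigma> \<in> simplices (Suc n)" using s BD(2) by blast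
      show ?thesis using UA[OF s(1)] s(2) rst_post[OF sX s1 mono_deg kk(1) z2] unfolding xsD_def xa_def by simp
    qed
    have U2: "leg Xm (Suc n) \<sigma> \<cdot> z1 = leg Xm n \<sigma> \<cdot> xb" if sD: "\<sigma> \<in> simplices n" for \<sigma>
    proof -
      have sB: "\<sigma> \<in> boundary (Suc n)" "Suc n \<notin> \<sigma>" using Dn_B1[OF sD] by blast+
      show ?thesis using UA[OF sB(1)] sB(2) hleg[OF sD] kk z2 unfolding xsD_def xb_def by (simp add: cs)
    qed
    have U3: "gf (Suc n) \<cdot> z1 = rst C Zm n (gf n \<cdot> xb) (\<lambda>i. min i n) {0..Suc n}"
    proof -
      have hs: "pB'' {0..Suc n} \<in> hom C P'' (Z (Suc n))" using famD[OF fpB'' top1] sdt by simp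
      have gl: "gf (Suc n) \<cdot> leg Xm (Suc n) {0..Suc n} = gf (Suc n)" using leg_top[OF sX] idr[OF hgf] by simp
      have "gf (Suc n) \<cdot> z1 = (pB'' {0..Suc n} \<cdot> u'') \<cdot> z1" using u'' top1 sdt gl by simp
      also have "\<dots> = pB'' {0..Suc n} \<cdot> (u'' \<cdot> z1)" using hs u'' z1 by (simp add: cs)
      also have "\<dots> = pB'' {0..Suc n} \<cdot> (de \<cdot> z2)" using zq by simp
      also have "\<dots> = (pB'' {0..Suc n} \<cdot> de) \<cdot> z2" using hs de z2 by (simp add: cs)
      also have "\<dots> = rst C Zm n (gf n \<cdot> k2) (\<lambda>i. min i n) {0..Suc n} \<cdot> z2" using de top1 by simp
      also have "\<dots> = rst C Zm n ((gf n \<cdot> k2) \<cdot> z2) (\<lambda>i. min i n) {0..Suc n}"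
        by (rule rst_post[OF sZ top1 mono_deg hgk z2])
      finally show ?thesis unfolding xb_def using hgf kk z2 by (simp add: cs)
    qed
    have UK: "(\<forall>\<sigma>\<in>boundary n. leg Xm n \<sigma> \<cdot> xa = leg Xm n \<sigma> \<cdot> xb) \<and> gf n \<cdot> xa = gf n \<cdot> xb"
    proof (rule u'eqD[OF hxa hxb])
      have "u' \<cdot> xa = (u' \<cdot> k1) \<cdot> z2" unfolding xa_def using u'(1) kk(1) z2 by (simp add: cs)
      also have "\<dots> = (u' \<cdot> k2) \<cdot> z2" using kk(3) by simp
      also have "\<dots> = u' \<cdot> xb" unfolding xb_def using u'(1) kk(2) z2 by (simp add: cs)
      finally show "u' \<cdot> xa = u' \<cdot> xb" .
    qed
    have UK1: "\<forall>\<sigma>\<in>boundary n. leg Xm n \<sigma> \<cdot> xa = leg Xm n \<sigma> \<cdot> xb" and UK2: "gf n \<cdot> xa = gf n \<cdot> xb" using UK by blast+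
    have fxa: "fam C X Xm (boundary n) W (\<lambda>\<sigma>. leg Xm n \<sigma> \<cdot> xa)"
      by (rule fam_comp[OF sX gDn(2) leg_fam[OF sX BD(1)] hxa])
    have fxb: "fam C Y Ym (simplices n) W (\<lambda>\<sigma>. f (sdim \<sigma>) \<cdot> (leg Xm n \<sigma> \<cdot> xb))"
      by (rule fam_smap[OF sX sY f gDn(1) fam_comp[OF sX gDn(1) leg_fam[OF sX subset_refl] hxb]])
    obtain p where p: "p \<in> hom C W P" "\<forall>\<sigma>\<in>boundary n. pA \<sigma> \<cdot> p = leg Xm n \<sigma> \<cdot> xa"
      "\<forall>\<sigma>\<in>simplices n. pB \<sigma> \<cdot> p = f (sdim \<sigma>) \<cdot> (leg Xm n \<sigma> \<cdot> xb)"
      using rm_ex[OF rmP oW fxa fxb] UK1 by (metis (no_types, lifting))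
    have eq1: "u' \<cdot> xa = al \<cdot> p"
    proof (rule rm_uniq[OF rmP' comp_hom[OF hxa u'(1)] comp_hom[OF p(1) al(1)]])
      fix \<sigma> assume s: "\<sigma> \<in> boundary n"
      have hs: "pA' \<sigma> \<in> hom C P' (X (sdim \<sigma>))" using famD[OF fpA' s] .
      have "pA' \<sigma> \<cdot> (u' \<cdot> xa) = (pA' \<sigma> \<cdot> u') \<cdot> xa" using hs u' hxa by (simp add: cs)
      also have "\<dots> = pA \<sigma> \<cdot> p" using u' p s by simp
      also have "\<dots> = (pA' \<sigma> \<cdot> al) \<cdot> p" using al s by simp
      also have "\<dots> = pA' \<sigma> \<cdot> (al \<cdot> p)" using hs al p by (simp add: cs)
      finally show "pA' \<sigma> \<cdot> (u' \<cdot> xa) = pA' \<sigma> \<cdot> (al \<cdot> p)" .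
    next
      fix \<sigma> assume s: "\<sigma> \<in> simplices n"
      have hs: "pB' \<sigma> \<in> hom C P' (Z (sdim \<sigma>))" using famD[OF fpB' s] .
      have "pB' \<sigma> \<cdot> (u' \<cdot> xa) = (pB' \<sigma> \<cdot> u') \<cdot> xa" using hs u' hxa by (simp add: cs)
      also have "\<dots> = gf (sdim \<sigma>) \<cdot> (leg Xm n \<sigma> \<cdot> xa)" using u' s hgf hleg[OF s] hxa by (simp add: cs)
      also have "\<dots> = leg Zm n \<sigma> \<cdot> (gf n \<cdot> xa)" by (rule leg_nat[OF sX sZ sgf s hxa])
      also have "\<dots> = leg Zm n \<sigma> \<cdot> (gf n \<cdot> xb)" using UK2 by simp
      also have "\<dots> = gf (sdim \<sigma>) \<cdot> (leg Xm n \<sigma> \<cdot> xb)" by (rule leg_nat[OF sX sZ sgf s hxb, symmetric])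
      also have "\<dots> = g (sdim \<sigma>) \<cdot> (pB \<sigma> \<cdot> p)" unfolding gfe using p s hf hg' hleg[OF s] hxb by (simp add: cs)
      also have "\<dots> = (pB' \<sigma> \<cdot> al) \<cdot> p" using al s hg' hpB[OF s] p by (simp add: cs)
      also have "\<dots> = pB' \<sigma> \<cdot> (al \<cdot> p)" using hs al p by (simp add: cs)
      finally show "pB' \<sigma> \<cdot> (u' \<cdot> xa) = pB' \<sigma> \<cdot> (al \<cdot> p)" .
    qed
    have dal: "Dom C al = P" using homD[OF al(1)] by blast
    obtain m1' where m1': "m1' \<in> hom C W M1" "m1x \<cdot> m1' = xa" "m1p \<cdot> m1' = p"
      using pb_ex[OF pb1] hxa p(1) du' dal eq1 by metis
    have hfz: "f (Suc n) \<cdot> z1 \<in> hom C W (Y (Suc n))" by (rule comp_hom[OF z1 hf])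
    have eq2: "v \<cdot> (f (Suc n) \<cdot> z1) = be \<cdot> m1'"
    proof (rule rm_uniq[OF rmQ comp_hom[OF hfz v(1)] comp_hom[OF m1'(1) be(1)]])
      fix \<sigma> assume s: "\<sigma> \<in> boundary (Suc n)"
      have s1: "\<sigma> \<in> simplices (Suc n)" using s BD(2) by blast
      have hs: "qA \<sigma> \<in> hom C Q (Y (sdim \<sigma>))" using famD[OF fqA s] .
      have "qA \<sigma> \<cdot> (v \<cdot> (f (Suc n) \<cdot> z1)) = leg Ym (Suc n) \<sigma> \<cdot> (f (Suc n) \<cdot> z1)"
        using pre[OF v(1) hs hfz] v(2) s by simp
      also have "\<dots> = f (sdim \<sigma>) \<cdot> (leg Xm (Suc n) \<sigma> \<cdot> z1)" by (rule leg_nat[OF sX sY f s1 z1, symmetric])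
      also have "\<dots> = xsB \<sigma> \<cdot> m1'"
      proof (cases "Suc n \<in> \<sigma>")
        case True
        have "xsB \<sigma> \<cdot> m1' = rst C Ym n ((f n \<cdot> m1x) \<cdot> m1') (\<lambda>i. min i n) \<sigma>"
          unfolding xsB_def using True rst_post[OF sY s1 mono_deg hfx m1'(1)] by simp
        also have "(f n \<cdot> m1x) \<cdot> m1' = f n \<cdot> xa" using hf m1 m1' by (simp add: cs)
        also have "rst C Ym n (f n \<cdot> xa) (\<lambda>i. min i n) \<sigma> = f (sdim \<sigma>) \<cdot> rst C Xm n xa (\<lambda>i. min i n) \<sigma>"
          by (rule rst_smap[OF sX sY f s1 mono_deg hxa, symmetric])
        also have "\<dots> = f (sdim \<sigma>) \<cdot> (leg Xm (Suc n) \<sigma> \<cdot> z1)" using U1[OF s True] by simp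
        finally show ?thesis by simp
      next
        case False
        have sD: "\<sigma> \<in> simplices n" using B1_notin' s False by blast
        have "xsB \<sigma> \<cdot> m1' = pB \<sigma> \<cdot> p" unfolding xsB_def using False hpB[OF sD] m1 m1' by (simp add: cs)
        also have "\<dots> = f (sdim \<sigma>) \<cdot> (leg Xm (Suc n) \<sigma> \<cdot> z1)" using p sD U2[OF sD] by simp
        finally show ?thesis by simp
      qed
      also have "\<dots> = qA \<sigma> \<cdot> (be \<cdot> m1')" using pre[OF be(1) hs m1'(1)] be(2) s by simp
      finally show "qA \<sigma> \<cdot> (v \<cdot> (f (Suc n) \<cdot> z1)) = qA \<sigma> \<cdot> (be \<cdot> m1')" .
    next
      have t: "qB {0..Suc n} \<cdot> (v \<cdot> (f (Suc n) \<cdot> z1)) = qB {0..Suc n} \<cdot> (be \<cdot> m1')"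
      proof -
        have hqb: "qB {0..Suc n} \<in> hom C Q (Z (Suc n))" using famD[OF fqB top1] sdt by simp
        have gv: "qB {0..Suc n} \<cdot> v = g (Suc n)" using v top1 leg_top[OF sY] idr[OF hg'] sdt by simp
        have "qB {0..Suc n} \<cdot> (v \<cdot> (f (Suc n) \<cdot> z1)) = (qB {0..Suc n} \<cdot> v) \<cdot> (f (Suc n) \<cdot> z1)"
          using hqb v hfz by (simp add: cs)
        also have "\<dots> = gf (Suc n) \<cdot> z1" unfolding gv gfe using hf hg' z1 by (simp add: cs)
        also have "\<dots> = rst C Zm n (gf n \<cdot> xb) (\<lambda>i. min i n) {0..Suc n}" by (rule U3)
        also have "gf n \<cdot> xb = yB \<cdot> m1'"
        proof -
          have "yB \<cdot> m1' = g n \<cdot> (pB {0..n} \<cdot> p)" unfolding yB_def using hg' hbt m1 m1' by (simp add: cs)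
          also have "\<dots> = g n \<cdot> (f n \<cdot> xb)" using p topn sdt leg_top[OF sX] idl[OF hxb] by simp
          also have "\<dots> = gf n \<cdot> xb" unfolding gfe using hf hg' hxb by (simp add: cs)
          finally show ?thesis by simp
        qed
        also have "rst C Zm n (yB \<cdot> m1') (\<lambda>i. min i n) {0..Suc n} = rst C Zm n yB (\<lambda>i. min i n) {0..Suc n} \<cdot> m1'"
          by (rule rst_post[OF sZ top1 mono_deg hyB m1'(1), symmetric])
        also have "\<dots> = qB {0..Suc n} \<cdot> (be \<cdot> m1')" using pre[OF be(1) hqb m1'(1)] be(3) top1 by simp
        finally show ?thesis .
      qed
      fix \<sigma> assume s: "\<sigma> \<in> simplices (Suc n)"
      show "qB \<sigma> \<cdot> (v \<cdot> (f (Suc n) \<cdot> z1)) = qB \<sigma> \<cdot> (be \<cdot> m1')"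
        using topred[OF fqB comp_hom[OF hfz v(1)] comp_hom[OF m1'(1) be(1)] t] s by blast
    qed
    have dv: "Dom C v = Y (Suc n)" "Dom C be = M1" using homD[OF v(1)] homD[OF be(1)] by blast+
    obtain m2' where m2': "m2' \<in> hom C W M2" "m2y \<cdot> m2' = f (Suc n) \<cdot> z1" "m2m \<cdot> m2' = m1'"
      using pb_ex[OF pb2] hfz m1'(1) dv eq2 by metis
    have eq3: "h \<cdot> z1 = ga \<cdot> m2'"
    proof (rule rm_uniq[OF rmH comp_hom[OF z1 h(1)] comp_hom[OF m2'(1) ga(1)]])
      fix \<sigma> assume s: "\<sigma> \<in> horn (Suc n) (Suc n)"
      have s1: "\<sigma> \<in> simplices (Suc n)" using s BD(4) by blast
      have hs: "hA \<sigma> \<in> hom C H (X (sdim \<sigma>))" using famD[OF fhA s] .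
      have "hA \<sigma> \<cdot> (h \<cdot> z1) = leg Xm (Suc n) \<sigma> \<cdot> z1" using pre[OF h(1) hs z1] h(2) s by simp
      also have "\<dots> = rst C Xm n xa (\<lambda>i. min i n) \<sigma>"
      proof (cases "Suc n \<in> \<sigma>")
        case True then show ?thesis using U1 s BD(3) by blast
      next
        case False
        have sB: "\<sigma> \<in> boundary n" by (rule Hn_notin[OF s False])
        have sD: "\<sigma> \<in> simplices n" using sB BD(1) by blast
        show ?thesis using U2[OF sD] UK1 sB rst_deg_id[OF sX sD] by simp
      qed
      also have "\<dots> = rst C Xm n ((m1x \<cdot> m2m) \<cdot> m2') (\<lambda>i. min i n) \<sigma>"
        using m1 m2 m2' m1' by (simp add: cs)
      also have "\<dots> = rst C Xm n (m1x \<cdot> m2m) (\<lambda>i. min i n) \<sigma> \<cdot> m2'"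
        by (rule rst_post[OF sX s1 mono_deg hx1 m2'(1), symmetric])
      also have "\<dots> = hA \<sigma> \<cdot> (ga \<cdot> m2')" using pre[OF ga(1) hs m2'(1)] ga(2) s by simp
      finally show "hA \<sigma> \<cdot> (h \<cdot> z1) = hA \<sigma> \<cdot> (ga \<cdot> m2')" .
    next
      fix \<sigma> assume s: "\<sigma> \<in> simplices (Suc n)"
      have hs: "hB \<sigma> \<in> hom C H (Y (sdim \<sigma>))" using famD[OF fhB s] .
      have "hB \<sigma> \<cdot> (h \<cdot> z1) = (f (sdim \<sigma>) \<cdot> leg Xm (Suc n) \<sigma>) \<cdot> z1" using pre[OF h(1) hs z1] h(3) s by simp
      also have "\<dots> = f (sdim \<sigma>) \<cdot> (leg Xm (Suc n) \<sigma> \<cdot> z1)" using hf hleg[OF s] z1 by (simp add: cs)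
      also have "\<dots> = leg Ym (Suc n) \<sigma> \<cdot> (f (Suc n) \<cdot> z1)" by (rule leg_nat[OF sX sY f s z1])
      also have "\<dots> = (leg Ym (Suc n) \<sigma> \<cdot> m2y) \<cdot> m2'" using m2' leg_hom[OF sY s] m2 by (simp add: cs)
      also have "\<dots> = hB \<sigma> \<cdot> (ga \<cdot> m2')" using pre[OF ga(1) hs m2'(1)] ga(3) s by simp
      finally show "hB \<sigma> \<cdot> (h \<cdot> z1) = hB \<sigma> \<cdot> (ga \<cdot> m2')" .
    qed
    have dh: "Dom C h = X (Suc n)" "Dom C ga = M2" using homD[OF h(1)] homD[OF ga(1)] by blast+
    obtain m' where m': "m' \<in> hom C W M3" "m3v \<cdot> m' = z1" "m3m \<cdot> m' = m2'"
      using pb_ex[OF pb3] z1 m2'(1) dh eq3 by metis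
    have km: "ka \<cdot> m' = z2"
    proof (rule pb_uniq[OF pbK comp_hom[OF m'(1) ka(1)] z2])
      have "k1 \<cdot> (ka \<cdot> m') = (k1 \<cdot> ka) \<cdot> m'" using kk(1,2) ka(1) m'(1) by (simp add: cs)
      also have "\<dots> = x0 \<cdot> m'" using ka by simp
      also have "\<dots> = m1x \<cdot> (m2m \<cdot> (m3m \<cdot> m'))" unfolding x0_def using m1 m2 m3 m' by (simp add: cs)
      also have "\<dots> = xa" using m' m2' m1' by simp
      finally show "k1 \<cdot> (ka \<cdot> m') = k1 \<cdot> z2" unfolding xa_def .
    next
      have "k2 \<cdot> (ka \<cdot> m') = (k2 \<cdot> ka) \<cdot> m'" using kk(1,2) ka(1) m'(1) by (simp add: cs)
      also have "\<dots> = c \<cdot> m'" using ka by simp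
      also have "\<dots> = dX \<cdot> z1" unfolding c_def using hdX m3 m' by (simp add: cs)
      also have "\<dots> = leg Xm n {0..n} \<cdot> (dX \<cdot> z1)" using leg_top[OF sX] idl comp_hom[OF z1 hdX] by simp
      also have "\<dots> = leg Xm (Suc n) {0..n} \<cdot> z1" unfolding dX_def by (rule face_leg[OF sX topn z1])
      also have "\<dots> = leg Xm n {0..n} \<cdot> xb" by (rule U2[OF topn])
      also have "\<dots> = xb" using leg_top[OF sX] idl hxb by simp
      finally show "k2 \<cdot> (ka \<cdot> m') = k2 \<cdot> z2" unfolding xb_def .
    qed
    show "\<exists>!m. m \<in> hom C W M3 \<and> m3v \<cdot> m = z1 \<and> ka \<cdot> m = z2"
    proof (rule ex1I[of _ m'])
      show "m' \<in> hom C W M3 \<and> m3v \<cdot> m' = z1 \<and> ka \<cdot> m' = z2" using m' km by blast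
    next
      fix mm assume mm: "mm \<in> hom C W M3 \<and> m3v \<cdot> mm = z1 \<and> ka \<cdot> mm = z2"
      show "mm = m'" using uniqM3[of mm W m'] mm m' km by simp
    qed
  qed
  have kaC: "ka \<in> Cov" by (rule cov_pb[OF u''C PB3])
  have cC: "c \<in> Cov" using cov_comp[OF kaC k2C ka(1) kk(2)] ka(3) by simp
  show ?thesis by (rule cov_cancel[OF cC u hc]) (simp add: uce eC)
qed

end


theorem lemma3p26:
  fixes C :: "('o,'m) cat" and Cov :: "'m set" and k :: nat
    and X Y Z :: "nat \<Rightarrow> 'o"
    and Xm Ym Zm :: "nat \<Rightarrow> nat \<Rightarrow> (nat \<Rightarrow> nat) \<Rightarrow> 'm"
    and f g :: "nat \<Rightarrow> 'm"
  assumes "descent_category C Cov"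
    and "k_groupoid C Cov k X Xm"
    and "k_groupoid C Cov k Y Ym"
    and "k_groupoid C Cov k Z Zm"
    and "is_smap C X Xm Y Ym f"
    and "is_smap C Y Ym Z Zm g"
    and "fibration C Cov X Xm Y Ym f"
    and "hypercover C Cov Y Ym Z Zm g"
    and "hypercover C Cov X Xm Z Zm (\<lambda>n. Cmp C (g n) (f n))"
  shows "hypercover C Cov X Xm Y Ym f"
proof -
  interpret dcat C Cov by (unfold_locales) (rule assms(1))
  have sX: "is_simplicial C X Xm" using assms(2) unfolding k_groupoid_def by blast
  have sY: "is_simplicial C Y Ym" using assms(3) unfolding k_groupoid_def by blast
  have sZ: "is_simplicial C Z Zm" using assms(4) unfolding k_groupoid_def by blast
  show ?thesis unfolding hypercover_def rel_map_prop_def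
  proof (intro allI impI, elim conjE)
    fix n LSX pSX LSY pSY LTY pTY a b P q1 q2 u
    assume "is_Map C X Xm (boundary n) LSX pSX" "is_Map C Y Ym (boundary n) LSY pSY"
      "is_Map C Y Ym (simplices n) LTY pTY" "a \<in> hom C LSX LSY"
      "\<forall>\<sigma>\<in>boundary n. Cmp C (pSY \<sigma>) a = Cmp C (f (sdim \<sigma>)) (pSX \<sigma>)"
      "b \<in> hom C LTY LSY" "\<forall>\<sigma>\<in>boundary n. Cmp C (pSY \<sigma>) b = pTY \<sigma>"
      "is_pullback C a b P q1 q2" "u \<in> hom C (X n) P"
      "\<forall>\<sigma>\<in>boundary n. Cmp C (pSX \<sigma>) (Cmp C q1 u) = leg Xm n \<sigma>"
      "\<forall>\<sigma>\<in>simplices n. Cmp C (pTY \<sigma>) (Cmp C q2 u) = Cmp C (f (sdim \<sigma>)) (leg Xm n \<sigma>)"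
    then show "u \<in> Cov"
      by (rule main_step[OF sX sY sZ assms(5,6,7,8,9)])
  qed
qed

end
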